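(* Let $f=f^\alpha$ be a developable strip along an arc-length parametrized $C^\infty$ embedded curve $\mathbf c:I\to\mathbb R^3$ with curvature $\kappa>0$, let $C=\mathbf c(I)$, and let $\epsilon>0$ be sufficiently small. Suppose $C$ has no symmetries, i.e. there is no isometry $T\neq\mathrm{id}$ of $\mathbb R^3$ with $T(C)=C$. Then for every $\delta\in(0,\epsilon]$, the set $\phi_f(\Omega_\delta)$ is not congruent to any subset of $\psi_f(\Omega_\epsilon)$; that is, there is no isometry $T$ of $\mathbb R^3$ with $T(\phi_f(\Omega_\delta))\subset\psi_f(\Omega_\epsilon)$. Here $\Omega_\delta=I\times(-\delta,\delta)$.
   Context: Space curves. For a $C^\infty$ curve $\mathbf c:I\to\mathbb R^3$, $I=[a,b]$, parametrized by arc length with curvature $\kappa=|\mathbf c''|>0$, set $\mathbf e=\mathbf c'$, $\mathbf n=\mathbf c''/\kappa$, $\mathbf b=\mathbf e\times\mathbf n$, and torsion $\tau:=\mathbf n'\cdot\mathbf b$. Developable strips. Given $C^\infty$ functions $\alpha,\beta$ on $I$ with $0<|\alpha(t)|<\pi/2$ and $0<\beta(t)<\pi$, the ruled surface is $f(t,v)=\mathbf c(t)+v\,\xi(t)$, $(t,v)\in I\times(-\epsilon,\epsilon)$, with $\xi=\cos\beta\,\mathbf e+\sin\beta(\cos\alpha\,\mathbf n+\sin\alpha\,\mathbf b)$; $\alpha$ is the first angular function. $f$ is developable iff $\cot\beta=(\alpha'+\tau)/(\kappa\sin\alpha)$; the developable strip with first angular function $\alpha$ is denoted $f^\alpha$.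 The dual of $f=f^\alpha$ is $\check f:=f^{-\alpha}$. Origami maps. $\phi_f(t,v)=f(t,v)$ for $v\ge0$ and $\phi_f(t,v)=\check f(t,v)$ for $v<0$; $\psi_f(t,v)=\check f(t,v)$ for $v\ge0$ and $\psi_f(t,v)=f(t,v)$ for $v<0$. *)

theory Defs
  imports "HOL-Analysis.Analysis"
begin

definition vd :: "real set \<Rightarrow> (real \<Rightarrow> 'a::real_normed_vector) \<Rightarrow> real \<Rightarrow> 'a" where
  "vd I f t = vector_derivative f (at t within I)"

definition smooth_on :: "real set \<Rightarrow> (real \<Rightarrow> 'a::real_normed_vector) \<Rightarrow> bool" where
  "smooth_on I f \<longleftrightarrow> (\<exists>D. D 0 = f \<and>
      (\<forall>k. \<forall>t\<in>I. (D k has_vector_derivative D (Suc k) t) (at t within I)))"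

definition tang :: "real set \<Rightarrow> (real \<Rightarrow> real^3) \<Rightarrow> real \<Rightarrow> real^3" where
  "tang I c t = vd I c t"

definition curv :: "real set \<Rightarrow> (real \<Rightarrow> real^3) \<Rightarrow> real \<Rightarrow> real" where
  "curv I c t = norm (vd I (tang I c) t)"

definition normal :: "real set \<Rightarrow> (real \<Rightarrow> real^3) \<Rightarrow> real \<Rightarrow> real^3" where
  "normal I c t = (1 / curv I c t) *\<^sub>R vd I (tang I c) t"

definition binormal :: "real set \<Rightarrow> (real \<Rightarrow> real^3) \<Rightarrow> real \<Rightarrow> real^3" where
  "binormal I c t = cross3 (tang I c t) (normal I c t)"

definition tors :: "real set \<Rightarrow> (real \<Rightarrow> real^3) \<Rightarrow> real \<Rightarrow> real" where
  "tors I c t = vd I (normal I c) t \<bullet> binormal I c t"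

text \<open>Second angular function beta of the developable strip f^alpha: the unique
  beta in (0,pi) with cot beta = (alpha' + tau) / (kappa sin alpha).
  (pi/2 - arctan x is the unique angle in (0,pi) with cotangent x.)\<close>
definition beta :: "real set \<Rightarrow> (real \<Rightarrow> real^3) \<Rightarrow> (real \<Rightarrow> real) \<Rightarrow> real \<Rightarrow> real" where
  "beta I c \<alpha> t = pi / 2 - arctan ((vd I \<alpha> t + tors I c t) / (curv I c t * sin (\<alpha> t)))"

definition ruling :: "real set \<Rightarrow> (real \<Rightarrow> real^3) \<Rightarrow> (real \<Rightarrow> real) \<Rightarrow> real \<Rightarrow> real^3" where
  "ruling I c \<alpha> t = cos (beta I c \<alpha> t) *\<^sub>R tang I c t
     + sin (beta I c \<alpha> t) *\<^sub>R (cos (\<alpha> t) *\<^sub>R normal I c t + sin (\<alpha> t) *\<^sub>R binormal I c t)"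

definition strip :: "real set \<Rightarrow> (real \<Rightarrow> real^3) \<Rightarrow> (real \<Rightarrow> real) \<Rightarrow> real \<times> real \<Rightarrow> real^3" where
  "strip I c \<alpha> p = c (fst p) + snd p *\<^sub>R ruling I c \<alpha> (fst p)"

definition origami_phi :: "real set \<Rightarrow> (real \<Rightarrow> real^3) \<Rightarrow> (real \<Rightarrow> real) \<Rightarrow> real \<times> real \<Rightarrow> real^3" where
  "origami_phi I c \<alpha> p =
     (if snd p \<ge> 0 then strip I c \<alpha> p else strip I c (\<lambda>t. - \<alpha> t) p)"

definition origami_psi :: "real set \<Rightarrow> (real \<Rightarrow> real^3) \<Rightarrow> (real \<Rightarrow> real) \<Rightarrow> real \<times> real \<Rightarrow> real^3" where
  "origami_psi I c \<alpha> p =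
     (if snd p \<ge> 0 then strip I c (\<lambda>t. - \<alpha> t) p else strip I c \<alpha> p)"

definition Omega :: "real set \<Rightarrow> real \<Rightarrow> (real \<times> real) set" where
  "Omega I \<delta> = I \<times> {-\<delta><..<\<delta>}"

definition isometry3 :: "(real^3 \<Rightarrow> real^3) \<Rightarrow> bool" where
  "isometry3 T \<longleftrightarrow> (\<forall>x y. dist (T x) (T y) = dist x y)"

end

theory Submission
  imports Defs
begin


fun Ck :: "real set \<Rightarrow> nat \<Rightarrow> (real \<Rightarrow> 'a::real_normed_vector) \<Rightarrow> bool" where
  "Ck I 0 f = continuous_on I f"
| "Ck I (Suc k) f = (\<exists>f'. (\<forall>t\<in>I. (f has_vector_derivative f' t) (at t within I)) \<and> Ck I k f')"

lemma Ck_cong: "Ck I k f \<Longrightarrow> (\<And>t. t\<in>I \<Longrightarrow> f t = g t) \<Longrightarrow> Ck I k g"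
proof (induction k arbitrary: f g)
  case 0 then show ?case using continuous_on_cong by (metis Ck.simps(1))
next
  case (Suc k)
  then obtain f' where f': "\<forall>t\<in>I. (f has_vector_derivative f' t) (at t within I)" "Ck I k f'" by auto
  have "\<forall>t\<in>I. (g has_vector_derivative f' t) (at t within I)"
    using f'(1) Suc.prems(2) unfolding has_vector_derivative_def
    by (metis has_derivative_transform)
  then show ?case using f'(2) by auto
qed

lemma Ck_down: "Ck I (Suc k) f \<Longrightarrow> Ck I k f"
proof (induction k arbitrary: f)
  case 0
  then obtain f' where "\<forall>t\<in>I. (f has_vector_derivative f' t) (at t within I)" by auto
  then show ?case using has_vector_derivative_continuous continuous_on_eq_continuous_within by fastforce
next
  case (Suc k)
  then obtain f' where "\<forall>t\<in>I. (f has_vector_derivative f' t) (at t within I)" "Ck I (Suc k) f'" by auto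
  then show ?case using Suc.IH by auto
qed

lemma Ck_le: "Ck I k f \<Longrightarrow> m \<le> k \<Longrightarrow> Ck I m f"
proof (induction k)
  case 0 then show ?case by simp
next
  case (Suc k) then show ?case using Ck_down by (metis le_Suc_eq)
qed

lemma Ck_const: "Ck I k (\<lambda>t. c)"
proof (induction k arbitrary: c)
  case 0 then show ?case by simp
next
  case (Suc k) then show ?case by (auto intro!: exI[of _ "\<lambda>t. 0"] derivative_eq_intros)
qed

lemma Ck_id: "Ck I k (\<lambda>t. t)"
proof (cases k)
  case 0 then show ?thesis by (simp add: continuous_on_id)
next
  case (Suc m) then show ?thesis
    by (auto intro!: exI[of _ "\<lambda>t. 1"] derivative_eq_intros Ck_const)
qed

lemma Ck_add: "Ck I k f \<Longrightarrow> Ck I k g \<Longrightarrow> Ck I k (\<lambda>t. f t + g t)"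
proof (induction k arbitrary: f g)
  case 0 then show ?case by (auto intro: continuous_on_add)
next
  case (Suc k)
  then obtain f' g' where "\<forall>t\<in>I. (f has_vector_derivative f' t) (at t within I)" "Ck I k f'"
     "\<forall>t\<in>I. (g has_vector_derivative g' t) (at t within I)" "Ck I k g'" by auto
  then show ?case using Suc.IH by (auto intro!: exI[of _ "\<lambda>t. f' t + g' t"] derivative_eq_intros)
qed

lemma Ck_uminus: "Ck I k f \<Longrightarrow> Ck I k (\<lambda>t. - f t)"
proof (induction k arbitrary: f)
  case 0 then show ?case by (auto intro: continuous_on_minus)
next
  case (Suc k)
  then obtain f' where "\<forall>t\<in>I. (f has_vector_derivative f' t) (at t within I)" "Ck I k f'" by auto
  then show ?case using Suc.IH by (auto intro!: exI[of _ "\<lambda>t. - f' t"] derivative_eq_intros)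
qed

lemma Ck_diff: "Ck I k f \<Longrightarrow> Ck I k g \<Longrightarrow> Ck I k (\<lambda>t. f t - g t)"
  using Ck_add[of I k f "\<lambda>t. - g t"] Ck_uminus[of I k g] by simp

lemma Ck_bilinear:
  assumes bb: "bounded_bilinear pr"
  shows "Ck I k f \<Longrightarrow> Ck I k g \<Longrightarrow> Ck I k (\<lambda>t. pr (f t) (g t))"
proof (induction k arbitrary: f g)
  case 0 then show ?case
    using bounded_bilinear.continuous_on[OF bb] by auto
next
  case (Suc k)
  then obtain f' g' where d: "\<forall>t\<in>I. (f has_vector_derivative f' t) (at t within I)" "Ck I k f'"
     "\<forall>t\<in>I. (g has_vector_derivative g' t) (at t within I)" "Ck I k g'" by auto
  have "Ck I k f" "Ck I k g" using Suc.prems Ck_down by blast+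
  then have "Ck I k (\<lambda>t. pr (f t) (g' t) + pr (f' t) (g t))"
    using Suc.IH d by (intro Ck_add) auto
  moreover have "\<forall>t\<in>I. ((\<lambda>t. pr (f t) (g t)) has_vector_derivative (pr (f t) (g' t) + pr (f' t) (g t))) (at t within I)"
    using d bounded_bilinear.has_vector_derivative[OF bb] by blast
  ultimately show ?case by auto
qed

lemma bounded_bilinear_cross3: "bounded_bilinear cross3"
proof -
  have "norm (cross3 x y) \<le> norm x * norm y * 1" for x y :: "real^3"
  proof -
    have "(norm (cross3 x y))\<^sup>2 \<le> (norm x * norm y)\<^sup>2" using norm_cross_dot[of x y]
      by (metis le_add_same_cancel1 zero_le_power2)
    then show ?thesis by (simp add: power2_le_iff_abs_le)
  qed
  then show ?thesis
    by (intro bounded_bilinear.intro) (auto simp: cross_add_left cross_add_right cross_mult_left cross_mult_right intro!: exI[of _ 1])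
qed

lemma Ck_scaleR: "Ck I k f \<Longrightarrow> Ck I k g \<Longrightarrow> Ck I k (\<lambda>t. f t *\<^sub>R g t)"
  by (rule Ck_bilinear[OF bounded_bilinear_scaleR])
lemma Ck_mult: "Ck I k f \<Longrightarrow> Ck I k g \<Longrightarrow> Ck I k (\<lambda>t. f t * (g t::real))"
  by (rule Ck_bilinear[OF bounded_bilinear_mult])
lemma Ck_inner: "Ck I k f \<Longrightarrow> Ck I k g \<Longrightarrow> Ck I k (\<lambda>t. inner (f t) (g t :: 'a::real_inner))"
  by (rule Ck_bilinear[OF bounded_bilinear_inner])
lemma Ck_cross: "Ck I k f \<Longrightarrow> Ck I k g \<Longrightarrow> Ck I k (\<lambda>t. cross3 (f t) (g t))"
  by (rule Ck_bilinear[OF bounded_bilinear_cross3])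

lemma Ck_realD:
  assumes "Ck I (Suc k) (h::real\<Rightarrow>real)"
  obtains h' where "\<forall>t\<in>I. (h has_real_derivative h' t) (at t within I)" "Ck I k h'"
  using assms by (auto simp: has_real_derivative_iff_has_vector_derivative)

lemma Ck_realI:
  "(\<forall>t\<in>I. ((h::real\<Rightarrow>real) has_real_derivative h' t) (at t within I)) \<Longrightarrow> Ck I k h' \<Longrightarrow> Ck I (Suc k) h"
  by (auto simp: has_real_derivative_iff_has_vector_derivative)

lemma Ck_inverse: "Ck I k (h::real\<Rightarrow>real) \<Longrightarrow> (\<And>t. t\<in>I \<Longrightarrow> h t \<noteq> 0) \<Longrightarrow> Ck I k (\<lambda>t. inverse (h t))"
proof (induction k arbitrary: h)
  case 0 then show ?case by (auto intro!: continuous_on_inverse)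
next
  case (Suc k)
  from Suc.prems(1) obtain h' where d: "\<forall>t\<in>I. (h has_real_derivative h' t) (at t within I)" "Ck I k h'"
    by (rule Ck_realD)
  have ih: "Ck I k (\<lambda>t. inverse (h t))" using Suc Ck_down by blast
  have "Ck I k (\<lambda>t. - (h' t * (inverse (h t) * inverse (h t))))"
    using d ih by (intro Ck_uminus Ck_mult) auto
  moreover have "\<forall>t\<in>I. ((\<lambda>t. inverse (h t)) has_real_derivative - (h' t * (inverse (h t) * inverse (h t)))) (at t within I)"
    using d Suc.prems(2) by (auto intro!: derivative_eq_intros simp: field_simps power2_eq_square)
  ultimately show ?case by (intro Ck_realI)
qed

lemma Ck_sin_cos: "Ck I k (h::real\<Rightarrow>real) \<Longrightarrow> Ck I k (\<lambda>t. sin (h t)) \<and> Ck I k (\<lambda>t. cos (h t))"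
proof (induction k arbitrary: h)
  case 0 then show ?case by (auto intro!: continuous_intros)
next
  case (Suc k)
  from Suc.prems(1) obtain h' where d: "\<forall>t\<in>I. (h has_real_derivative h' t) (at t within I)" "Ck I k h'"
    by (rule Ck_realD)
  have ih: "Ck I k (\<lambda>t. sin (h t))" "Ck I k (\<lambda>t. cos (h t))" using Suc Ck_down by blast+
  have "Ck I k (\<lambda>t. cos (h t) * h' t)" "Ck I k (\<lambda>t. - (sin (h t) * h' t))"
    using d ih by (auto intro!: Ck_uminus Ck_mult)
  moreover have "\<forall>t\<in>I. ((\<lambda>t. sin (h t)) has_real_derivative cos (h t) * h' t) (at t within I)"
     "\<forall>t\<in>I. ((\<lambda>t. cos (h t)) has_real_derivative - (sin (h t) * h' t)) (at t within I)"
    using d by (auto intro!: derivative_eq_intros)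
  ultimately show ?case using Ck_realI[of I h "\<lambda>t. cos (h t) * h' t" k] Ck_realI[of I "\<lambda>t. sin (h t)"] Ck_realI[of I "\<lambda>t. sin (h t)" "\<lambda>t. cos (h t) * h' t" k] Ck_realI[of I "\<lambda>t. cos (h t)" "\<lambda>t. - (sin (h t) * h' t)" k] by blast
qed

lemma Ck_arctan: assumes "Ck I k (h::real\<Rightarrow>real)" shows "Ck I k (\<lambda>t. arctan (h t))"
proof (cases k)
  case 0 then show ?thesis using assms by (auto intro!: continuous_intros)
next
  case (Suc m)
  note \<open>Ck I k h\<close>
  then obtain h' where d: "\<forall>t\<in>I. (h has_real_derivative h' t) (at t within I)" "Ck I m h'"
    using Suc Ck_realD by metis
  have "Ck I m h" using \<open>Ck I k h\<close> Suc Ck_down by blast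
  have "Ck I m (\<lambda>t. h' t * inverse (1 + h t * h t))"
    using d \<open>Ck I m h\<close>
    by (intro Ck_mult Ck_inverse Ck_add Ck_const) (auto, smt (verit) zero_le_square)
  moreover have "\<forall>t\<in>I. ((\<lambda>t. arctan (h t)) has_real_derivative h' t * inverse (1 + h t * h t)) (at t within I)"
    using d by (auto intro!: derivative_eq_intros simp: field_simps power2_eq_square)
  ultimately have "Ck I (Suc m) (\<lambda>t. arctan (h t))" by (rule Ck_realI[rotated])
  then show ?thesis using Suc by simp
qed

lemma Ck_sqrt: "Ck I k (h::real\<Rightarrow>real) \<Longrightarrow> (\<And>t. t\<in>I \<Longrightarrow> h t > 0) \<Longrightarrow> Ck I k (\<lambda>t. sqrt (h t))"
proof (induction k arbitrary: h)
  case 0 then show ?case by (auto intro!: continuous_intros)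
next
  case (Suc k)
  from Suc.prems(1) obtain h' where d: "\<forall>t\<in>I. (h has_real_derivative h' t) (at t within I)" "Ck I k h'"
    by (rule Ck_realD)
  have ih: "Ck I k (\<lambda>t. sqrt (h t))" using Suc Ck_down by blast
  have "Ck I k (\<lambda>t. h' t * inverse (2 * sqrt (h t)))"
  proof -
    have "\<And>t. t\<in>I \<Longrightarrow> 2 * sqrt (h t) \<noteq> 0" using Suc.prems(2) by (metis less_irrefl mult_eq_0_iff real_sqrt_eq_zero_cancel_iff zero_neq_numeral)
    then show ?thesis using d ih by (intro Ck_mult Ck_inverse Ck_const) auto
  qed
  moreover have "\<forall>t\<in>I. ((\<lambda>t. sqrt (h t)) has_real_derivative h' t * inverse (2 * sqrt (h t))) (at t within I)"
    using d Suc.prems(2) by (auto intro!: derivative_eq_intros simp: field_simps) (metis less_irrefl, metis not_less_iff_gr_or_eq)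
  ultimately show ?case by (intro Ck_realI)
qed

lemma Ck_norm: "Ck I k (f::real\<Rightarrow>'a::real_inner) \<Longrightarrow> (\<And>t. t\<in>I \<Longrightarrow> f t \<noteq> 0) \<Longrightarrow> Ck I k (\<lambda>t. norm (f t))"
proof -
  assume a: "Ck I k f" "\<And>t. t\<in>I \<Longrightarrow> f t \<noteq> 0"
  have "Ck I k (\<lambda>t. sqrt (inner (f t) (f t)))"
    using a by (intro Ck_sqrt Ck_inner) auto
  then show ?thesis by (rule Ck_cong) (simp add: norm_eq_sqrt_inner)
qed

lemma Ck_vd:
  fixes f :: "real \<Rightarrow> 'a::euclidean_space"
  assumes "a < b" "Ck {a..b} (Suc k) f"
  shows "Ck {a..b} k (vd {a..b} f)"
proof -
  obtain f' where "\<forall>t\<in>{a..b}. (f has_vector_derivative f' t) (at t within {a..b})" "Ck {a..b} k f'"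
    using assms by auto
  then show ?thesis
    by (elim Ck_cong) (metis assms(1) vd_def vector_derivative_within_closed_interval)
qed

lemma Ck_vd_deriv:
  fixes f :: "real \<Rightarrow> 'a::euclidean_space"
  assumes "a < b" "Ck {a..b} (Suc k) f" "t \<in> {a..b}"
  shows "(f has_vector_derivative vd {a..b} f t) (at t within {a..b})"
proof -
  obtain f' where "\<forall>t\<in>{a..b}. (f has_vector_derivative f' t) (at t within {a..b})"
    using assms by auto
  then show ?thesis
    by (metis assms(1,3) vd_def vector_derivative_within_closed_interval)
qed

lemma smooth_Ck:
  assumes "smooth_on I f" shows "Ck I k f"
proof -
  obtain D where D: "D 0 = f" "\<forall>k. \<forall>t\<in>I. (D k has_vector_derivative D (Suc k) t) (at t within I)"
    using assms unfolding smooth_on_def by blast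
  have "\<forall>j. Ck I k (D j)"
  proof (induction k)
    case 0 then show ?case using D(2) has_vector_derivative_continuous continuous_on_eq_continuous_within
      by (metis Ck.simps(1))
  next
    case (Suc k) then show ?case using D(2) by auto
  qed
  then show ?thesis using D(1) by metis
qed

definition Sm :: "real set \<Rightarrow> (real \<Rightarrow> 'a::real_normed_vector) \<Rightarrow> bool" where
  "Sm I f \<longleftrightarrow> (\<forall>k. Ck I k f)"



lemma Sm_cong: "Sm I f \<Longrightarrow> (\<And>t. t\<in>I \<Longrightarrow> f t = g t) \<Longrightarrow> Sm I g"
  unfolding Sm_def using Ck_cong by blast
lemma Sm_const: "Sm I (\<lambda>t. c)" unfolding Sm_def using Ck_const by blast
lemma Sm_add: "Sm I f \<Longrightarrow> Sm I g \<Longrightarrow> Sm I (\<lambda>t. f t + g t)" unfolding Sm_def using Ck_add by blast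
lemma Sm_diff: "Sm I f \<Longrightarrow> Sm I g \<Longrightarrow> Sm I (\<lambda>t. f t - g t)" unfolding Sm_def using Ck_diff by blast
lemma Sm_uminus: "Sm I f \<Longrightarrow> Sm I (\<lambda>t. - f t)" unfolding Sm_def using Ck_uminus by blast
lemma Sm_scaleR: "Sm I f \<Longrightarrow> Sm I g \<Longrightarrow> Sm I (\<lambda>t. f t *\<^sub>R g t)" unfolding Sm_def using Ck_scaleR by blast
lemma Sm_mult: "Sm I f \<Longrightarrow> Sm I g \<Longrightarrow> Sm I (\<lambda>t. f t * (g t::real))" unfolding Sm_def using Ck_mult by blast
lemma Sm_inner: "Sm I f \<Longrightarrow> Sm I g \<Longrightarrow> Sm I (\<lambda>t. inner (f t) (g t :: 'a::real_inner))" unfolding Sm_def using Ck_inner by blast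
lemma Sm_cross: "Sm I f \<Longrightarrow> Sm I g \<Longrightarrow> Sm I (\<lambda>t. cross3 (f t) (g t))" unfolding Sm_def using Ck_cross by blast
lemma Sm_inverse: "Sm I (h::real\<Rightarrow>real) \<Longrightarrow> (\<And>t. t\<in>I \<Longrightarrow> h t \<noteq> 0) \<Longrightarrow> Sm I (\<lambda>t. inverse (h t))"
  unfolding Sm_def using Ck_inverse by blast
lemma Sm_sin: "Sm I (h::real\<Rightarrow>real) \<Longrightarrow> Sm I (\<lambda>t. sin (h t))" unfolding Sm_def using Ck_sin_cos by blast
lemma Sm_cos: "Sm I (h::real\<Rightarrow>real) \<Longrightarrow> Sm I (\<lambda>t. cos (h t))" unfolding Sm_def using Ck_sin_cos by blast
lemma Sm_arctan: "Sm I (h::real\<Rightarrow>real) \<Longrightarrow> Sm I (\<lambda>t. arctan (h t))" unfolding Sm_def using Ck_arctan by blast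
lemma Sm_norm: "Sm I (f::real\<Rightarrow>'a::real_inner) \<Longrightarrow> (\<And>t. t\<in>I \<Longrightarrow> f t \<noteq> 0) \<Longrightarrow> Sm I (\<lambda>t. norm (f t))"
  unfolding Sm_def using Ck_norm by blast
lemma Sm_vd: "a < b \<Longrightarrow> Sm {a..b} (f::real \<Rightarrow> 'a::euclidean_space) \<Longrightarrow> Sm {a..b} (vd {a..b} f)"
  unfolding Sm_def using Ck_vd by blast
lemma Sm_deriv: "a < b \<Longrightarrow> Sm {a..b} (f::real \<Rightarrow> 'a::euclidean_space) \<Longrightarrow> t \<in> {a..b} \<Longrightarrow>
   (f has_vector_derivative vd {a..b} f t) (at t within {a..b})"
  unfolding Sm_def using Ck_vd_deriv by blast
lemma Sm_cont: "Sm I f \<Longrightarrow> continuous_on I f"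
  unfolding Sm_def by (metis Ck.simps(1))

locale curve =
  fixes a b :: real and c :: "real \<Rightarrow> real^3" and \<alpha> :: "real \<Rightarrow> real"
  assumes ab: "a < b"
    and sc: "smooth_on {a..b} c"
    and unit: "\<forall>t\<in>{a..b}. norm (vd {a..b} c t) = 1"
    and kpos: "\<forall>t\<in>{a..b}. curv {a..b} c t > 0"
    and injc: "inj_on c {a..b}"
    and sal: "smooth_on {a..b} \<alpha>"
    and alb: "\<forall>t\<in>{a..b}. 0 < \<bar>\<alpha> t\<bar> \<and> \<bar>\<alpha> t\<bar> < pi / 2"
begin

abbreviation "I \<equiv> {a..b}"
abbreviation "e \<equiv> tang I c"
abbreviation "n \<equiv> normal I c"
abbreviation "bn \<equiv> binormal I c"

lemma kne: "t \<in> I \<Longrightarrow> curv I c t \<noteq> 0" using kpos by (metis less_irrefl)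

lemma Sm_c: "Sm I c" using sc smooth_Ck Sm_def by blast
lemma Sm_e: "Sm I e" unfolding tang_def by (intro Sm_vd ab Sm_c)
lemma Sm_e': "Sm I (vd I e)" by (intro Sm_vd ab Sm_e)
lemma Sm_curv: "Sm I (curv I c)"
proof -
  have "Sm I (\<lambda>t. norm (vd I e t))"
    by (intro Sm_norm Sm_e') (metis kne curv_def norm_zero)
  then show ?thesis unfolding curv_def .
qed
lemma Sm_n: "Sm I n"
proof -
  have "Sm I (\<lambda>t. inverse (curv I c t) *\<^sub>R vd I e t)"
    by (intro Sm_scaleR Sm_inverse Sm_curv Sm_e') (simp add: kne)
  then show ?thesis by (rule Sm_cong) (simp add: normal_def inverse_eq_divide)
qed
lemma Sm_b: "Sm I bn" unfolding binormal_def by (intro Sm_cross Sm_e Sm_n)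
lemma Sm_tors: "Sm I (tors I c)" unfolding tors_def by (intro Sm_inner Sm_b Sm_vd ab Sm_n)

lemma Sm_ruling:
  assumes "Sm I \<gamma>" "\<And>t. t \<in> I \<Longrightarrow> sin (\<gamma> t) \<noteq> 0"
  shows "Sm I (beta I c \<gamma>)" "Sm I (ruling I c \<gamma>)"
proof -
  have 1: "Sm I (vd I \<gamma>)" by (rule Sm_vd[OF ab assms(1)])
  have 2: "Sm I (\<lambda>t. vd I \<gamma> t + tors I c t)" by (rule Sm_add[OF 1 Sm_tors])
  have 3: "Sm I (\<lambda>t. curv I c t * sin (\<gamma> t))" by (rule Sm_mult[OF Sm_curv Sm_sin[OF assms(1)]])
  have 4: "Sm I (\<lambda>t. inverse (curv I c t * sin (\<gamma> t)))" by (rule Sm_inverse[OF 3]) (metis kne assms(2) mult_eq_0_iff)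
  have 5: "Sm I (\<lambda>t. arctan ((vd I \<gamma> t + tors I c t) * inverse (curv I c t * sin (\<gamma> t))))"
    by (rule Sm_arctan[OF Sm_mult[OF 2 4]])
  have "Sm I (\<lambda>t. pi / 2 - arctan ((vd I \<gamma> t + tors I c t) * inverse (curv I c t * sin (\<gamma> t))))"
    by (rule Sm_diff[OF Sm_const 5])
  then show B: "Sm I (beta I c \<gamma>)" by (rule Sm_cong) (simp only: beta_def divide_inverse)
  show "Sm I (ruling I c \<gamma>)" unfolding ruling_def
    by (rule Sm_add[OF Sm_scaleR[OF Sm_cos[OF B] Sm_e] Sm_scaleR[OF Sm_sin[OF B] Sm_add[OF Sm_scaleR[OF Sm_cos[OF assms(1)] Sm_n] Sm_scaleR[OF Sm_sin[OF assms(1)] Sm_b]]]])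
qed

lemma sin_alpha_ne: "t \<in> I \<Longrightarrow> sin (\<alpha> t) \<noteq> 0"
  using alb sin_eq_0_pi[of "\<alpha> t"] by force

lemma Sm_alpha: "Sm I \<alpha>" using sal smooth_Ck Sm_def by blast

lemma Sm_X1: "Sm I (ruling I c \<alpha>)" using Sm_ruling Sm_alpha sin_alpha_ne by blast
lemma Sm_X2: "Sm I (ruling I c (\<lambda>t. - \<alpha> t))"
  using Sm_ruling[of "\<lambda>t. - \<alpha> t"] Sm_uminus[OF Sm_alpha] sin_alpha_ne by simp

end


lemma frame_basic:
  fixes e n :: "real^3"
  assumes "norm e = 1" "norm n = 1" "e \<bullet> n = 0"
  shows "e \<bullet> e = 1" "n \<bullet> n = 1" "cross3 e n \<bullet> cross3 e n = 1" "e \<bullet> cross3 e n = 0" "n \<bullet> cross3 e n = 0"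
    "cross3 e (cross3 e n) = - n" "n \<bullet> e = 0" "cross3 e n \<bullet> e = 0" "cross3 e n \<bullet> n = 0"
proof -
  show ee: "e \<bullet> e = 1" "n \<bullet> n = 1" using power2_norm_eq_inner[of e] power2_norm_eq_inner[of n] assms by simp_all
  have "(norm (cross3 e n))\<^sup>2 = 1" using norm_cross_dot[of e n] assms by simp
  then show "cross3 e n \<bullet> cross3 e n = 1" by (simp add: power2_norm_eq_inner)
  show "e \<bullet> cross3 e n = 0" "n \<bullet> cross3 e n = 0" "cross3 e n \<bullet> e = 0" "cross3 e n \<bullet> n = 0"
    using dot_cross_self by (auto simp: inner_commute)
  show "cross3 e (cross3 e n) = - n" using Lagrange[of e e n] assms ee by simp
  show "n \<bullet> e = 0" using assms by (simp add: inner_commute)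
qed

lemma frame_alg:
  fixes e n :: "real^3"
  assumes en: "norm e = 1" "norm n = 1" "e \<bullet> n = 0"
    and cs: "ca\<^sup>2 + sa\<^sup>2 = 1" "cb\<^sup>2 + sb\<^sup>2 = 1"
  defines "X \<equiv> cb *\<^sub>R e + sb *\<^sub>R (ca *\<^sub>R n + sa *\<^sub>R cross3 e n)"
  shows "cross3 e X = sb *\<^sub>R (ca *\<^sub>R cross3 e n - sa *\<^sub>R n)"
    "norm (cross3 e X) = \<bar>sb\<bar>"
    "norm X = 1"
proof -
  note f = frame_basic[OF en]
  show cx: "cross3 e X = sb *\<^sub>R (ca *\<^sub>R cross3 e n - sa *\<^sub>R n)"
    unfolding X_def by (simp add: cross_add_right cross_mult_right f en(3) algebra_simps)
  have "(norm (cross3 e X))\<^sup>2 = sb\<^sup>2 * (ca\<^sup>2 + sa\<^sup>2)"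
    unfolding power2_norm_eq_inner cx
    by (simp add: inner_add_left inner_add_right inner_diff_left inner_diff_right f inner_commute power2_eq_square algebra_simps)
  then have "(norm (cross3 e X))\<^sup>2 = sb\<^sup>2" using cs by simp
  then show "norm (cross3 e X) = \<bar>sb\<bar>" by (metis norm_ge_zero real_sqrt_abs real_sqrt_unique)
  have "(norm X)\<^sup>2 = cb\<^sup>2 + sb\<^sup>2 * (ca\<^sup>2 + sa\<^sup>2)"
    unfolding power2_norm_eq_inner X_def
    by (simp add: inner_add_left inner_add_right f en(3) inner_commute power2_eq_square algebra_simps)
  then show "norm X = 1" using cs norm_ge_zero[of X] by (auto simp: power2_eq_1_iff)
qed

lemma frame_triple:
  fixes e n :: "real^3"
  assumes en: "norm e = 1" "norm n = 1" "e \<bullet> n = 0"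
    and cs: "ca\<^sup>2 + sa\<^sup>2 = 1" "cb\<^sup>2 + sb\<^sup>2 = 1" "cb'\<^sup>2 + sb'\<^sup>2 = 1"
  defines "X \<equiv> cb *\<^sub>R e + sb *\<^sub>R (ca *\<^sub>R n + sa *\<^sub>R cross3 e n)"
    and "Y \<equiv> cb' *\<^sub>R e + sb' *\<^sub>R (ca *\<^sub>R n + (- sa) *\<^sub>R cross3 e n)"
  shows "e \<bullet> cross3 X Y = - 2 * sb * sb' * sa * ca"
proof -
  note f = frame_basic[OF en]
  have cs2: "(-sa)\<^sup>2 + ca\<^sup>2 = 1" using cs by simp
  have "cross3 e Y = sb' *\<^sub>R (ca *\<^sub>R cross3 e n - (- sa) *\<^sub>R n)"
    using frame_alg(1)[OF en, of ca "-sa" cb' sb'] cs unfolding Y_def by simp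
  moreover have "e \<bullet> cross3 X Y = - (cross3 e Y \<bullet> X)"
    by (metis cross_skew cross_triple inner_commute inner_minus_left)
  ultimately show ?thesis unfolding X_def
    by (simp add: inner_add_left inner_add_right inner_diff_left inner_diff_right f en(3) inner_commute algebra_simps)
qed

context curve begin

abbreviation "X1 \<equiv> ruling I c \<alpha>"
abbreviation "X2 \<equiv> ruling I c (\<lambda>t. - \<alpha> t)"

lemma e_unit: "t \<in> I \<Longrightarrow> norm (e t) = 1" using unit by (simp add: tang_def)

lemma e_deriv: "t \<in> I \<Longrightarrow> (e has_vector_derivative vd I e t) (at t within I)"
  by (rule Sm_deriv[OF ab Sm_e])

lemma c_deriv: "t \<in> I \<Longrightarrow> (c has_vector_derivative e t) (at t within I)"
  unfolding tang_def by (rule Sm_deriv[OF ab Sm_c])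

lemma e_perp: assumes t: "t \<in> I" shows "e t \<bullet> vd I e t = 0"
proof -
  have d1: "((\<lambda>s. e s \<bullet> e s) has_vector_derivative (e t \<bullet> vd I e t + vd I e t \<bullet> e t)) (at t within I)"
    using bounded_bilinear.has_vector_derivative[OF bounded_bilinear_inner e_deriv[OF t] e_deriv[OF t]] .
  have "((\<lambda>s. 1::real) has_vector_derivative 0) (at t within I)" by (rule has_vector_derivative_const)
  moreover have "\<And>s. s \<in> I \<Longrightarrow> e s \<bullet> e s = 1" by (metis e_unit power2_norm_eq_inner one_power2)
  ultimately have d2: "((\<lambda>s. e s \<bullet> e s) has_vector_derivative 0) (at t within I)"
    unfolding has_vector_derivative_def
    using has_derivative_transform[OF t, of "\<lambda>s. e s \<bullet> e s" "\<lambda>s. 1"] by metis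
  have "e t \<bullet> vd I e t + vd I e t \<bullet> e t = 0"
    using vector_derivative_within_closed_interval[OF ab t d1] vector_derivative_within_closed_interval[OF ab t d2] by simp
  then show ?thesis by (simp add: inner_commute)
qed

lemma n_props: assumes t: "t \<in> I" shows "norm (n t) = 1" "e t \<bullet> n t = 0"
proof -
  have k: "curv I c t = norm (vd I e t)" by (simp add: curv_def)
  have kp: "curv I c t > 0" using kpos t by blast
  show "norm (n t) = 1" unfolding normal_def using k kp by simp
  show "e t \<bullet> n t = 0" unfolding normal_def using e_perp[OF t] by simp
qed

lemma beta_sin: "sin (beta I c \<gamma> t) > 0"
proof -
  have "sin (beta I c \<gamma> t) = cos (arctan ((vd I \<gamma> t + tors I c t) / (curv I c t * sin (\<gamma> t))))"
    unfolding beta_def by (simp add: sin_diff)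
  also have "\<dots> > 0" by (simp add: cos_arctan add_pos_nonneg)
  finally show ?thesis .
qed

lemma ruling_form: "ruling I c \<gamma> t = cos (beta I c \<gamma> t) *\<^sub>R e t + sin (beta I c \<gamma> t) *\<^sub>R (cos (\<gamma> t) *\<^sub>R n t + sin (\<gamma> t) *\<^sub>R cross3 (e t) (n t))"
  by (simp add: ruling_def binormal_def)

lemma X_props:
  assumes t: "t \<in> I"
  shows "norm (ruling I c \<gamma> t) = 1" "norm (cross3 (e t) (ruling I c \<gamma> t)) = sin (beta I c \<gamma> t)"
proof -
  note en = e_unit[OF t] n_props[OF t]
  show "norm (ruling I c \<gamma> t) = 1" unfolding ruling_form
    by (rule frame_alg(3)[OF en]) simp_all
  have "norm (cross3 (e t) (ruling I c \<gamma> t)) = \<bar>sin (beta I c \<gamma> t)\<bar>" unfolding ruling_form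
    by (rule frame_alg(2)[OF en]) simp_all
  then show "norm (cross3 (e t) (ruling I c \<gamma> t)) = sin (beta I c \<gamma> t)"
    using beta_sin[of \<gamma> t] by simp
qed

lemma X_triple:
  assumes t: "t \<in> I"
  shows "e t \<bullet> cross3 (X1 t) (X2 t) \<noteq> 0"
proof -
  note en = e_unit[OF t] n_props[OF t]
  have "e t \<bullet> cross3 (X1 t) (X2 t) = - 2 * sin (beta I c \<alpha> t) * sin (beta I c (\<lambda>t. - \<alpha> t) t) * sin (\<alpha> t) * cos (\<alpha> t)"
    unfolding ruling_form using frame_triple[OF en, of "cos (\<alpha> t)" "sin (\<alpha> t)" "cos (beta I c \<alpha> t)" "sin (beta I c \<alpha> t)"
       "cos (beta I c (\<lambda>t. - \<alpha> t) t)" "sin (beta I c (\<lambda>t. - \<alpha> t) t)"] by simp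
  moreover have "cos (\<alpha> t) > 0"
  proof -
    have "\<bar>\<alpha> t\<bar> < pi/2" using alb t by blast
    then have h: "-(pi/2) < \<alpha> t \<and> \<alpha> t < pi/2" by linarith
    then show ?thesis by (intro cos_gt_zero_pi) auto
  qed
  moreover have "sin (\<alpha> t) \<noteq> 0" by (rule sin_alpha_ne[OF t])
  ultimately show ?thesis using beta_sin[of \<alpha> t] beta_sin[of "\<lambda>t. - \<alpha> t" t] by simp
qed

end



lemma norm_cross_le: "norm (cross3 x y) \<le> norm x * norm y"
proof -
  have "(norm (cross3 x y))\<^sup>2 \<le> (norm x * norm y)\<^sup>2" using norm_cross_dot[of x y]
    by (metis le_add_same_cancel1 zero_le_power2)
  then show ?thesis by (simp add: power2_le_iff_abs_le)
qed

lemma LB2: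
  fixes e X :: "real^3"
  assumes "norm e = 1" "norm X = 1" "m \<le> norm (cross3 e X)"
  shows "m * (\<bar>h\<bar> + \<bar>k\<bar>) \<le> 2 * norm (h *\<^sub>R e + k *\<^sub>R X)"
proof -
  let ?V = "h *\<^sub>R e + k *\<^sub>R X"
  have "cross3 ?V X = h *\<^sub>R cross3 e X" by (simp add: cross_add_left cross_mult_left)
  then have 1: "\<bar>h\<bar> * norm (cross3 e X) \<le> norm ?V" using norm_cross_le[of ?V X] assms by simp
  have "cross3 ?V e = k *\<^sub>R cross3 X e" by (simp add: cross_add_left cross_mult_left)
  moreover have "norm (cross3 X e) = norm (cross3 e X)" by (metis cross_skew norm_minus_cancel)
  ultimately have 2: "\<bar>k\<bar> * norm (cross3 e X) \<le> norm ?V" using norm_cross_le[of ?V e] assms by simp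
  have "\<bar>h\<bar> * m \<le> \<bar>h\<bar> * norm (cross3 e X)" "\<bar>k\<bar> * m \<le> \<bar>k\<bar> * norm (cross3 e X)"
    using assms(3) by (simp_all add: mult_left_mono)
  then show ?thesis using 1 2 by (simp add: algebra_simps)
qed

lemma LB3:
  fixes e X Y :: "real^3"
  assumes "norm e = 1" "norm X = 1" "norm Y = 1" "m \<le> \<bar>e \<bullet> cross3 X Y\<bar>"
  shows "m * (\<bar>h\<bar> + \<bar>k\<bar> + \<bar>l\<bar>) \<le> 3 * norm (h *\<^sub>R e + k *\<^sub>R X + l *\<^sub>R Y)"
proof -
  let ?V = "h *\<^sub>R e + k *\<^sub>R X + l *\<^sub>R Y"
  let ?D = "\<bar>e \<bullet> cross3 X Y\<bar>"
  have bnd: "\<bar>?V \<bullet> cross3 u w\<bar> \<le> norm ?V" if "norm u = 1" "norm w = 1" for u w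
  proof -
    have "\<bar>?V \<bullet> cross3 u w\<bar> \<le> norm ?V * norm (cross3 u w)" by (rule Cauchy_Schwarz_ineq2)
    also have "\<dots> \<le> norm ?V * 1" using norm_cross_le[of u w] that by (intro mult_left_mono) auto
    finally show ?thesis by simp
  qed
  have t1: "X \<bullet> cross3 e Y = - (e \<bullet> cross3 X Y)"
    by (metis cross_skew cross_triple inner_commute inner_minus_left)
  have t2: "Y \<bullet> cross3 e X = e \<bullet> cross3 X Y"
    by (metis cross_triple inner_commute)
  have "?V \<bullet> cross3 X Y = h * (e \<bullet> cross3 X Y)"
    by (simp add: inner_add_left dot_cross_self)
  then have 1: "\<bar>h\<bar> * ?D \<le> norm ?V" using bnd[of X Y] assms by (simp add: abs_mult)
  have "?V \<bullet> cross3 e Y = k * (X \<bullet> cross3 e Y)"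
    by (simp add: inner_add_left dot_cross_self)
  then have 2: "\<bar>k\<bar> * ?D \<le> norm ?V" using bnd[of e Y] assms t1 by (simp add: abs_mult)
  have "?V \<bullet> cross3 e X = l * (Y \<bullet> cross3 e X)"
    by (simp add: inner_add_left dot_cross_self)
  then have 3: "\<bar>l\<bar> * ?D \<le> norm ?V" using bnd[of e X] assms t2 by (simp add: abs_mult)
  have "\<bar>h\<bar> * m \<le> \<bar>h\<bar> * ?D" "\<bar>k\<bar> * m \<le> \<bar>k\<bar> * ?D" "\<bar>l\<bar> * m \<le> \<bar>l\<bar> * ?D"
    using assms(4) by (simp_all add: mult_left_mono)
  then show ?thesis using 1 2 3 by (simp add: algebra_simps)
qed

lemma MV_bound:
  fixes f :: "real \<Rightarrow> 'a::real_normed_vector"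
  assumes S: "convex S" and d: "\<And>r. r \<in> S \<Longrightarrow> (f has_vector_derivative f' r) (at r within S)"
    and B: "\<And>r. r \<in> S \<Longrightarrow> norm (f' r - v) \<le> B" and xy: "x \<in> S" "y \<in> S"
  shows "norm (f x - f y - (x - y) *\<^sub>R v) \<le> B * \<bar>x - y\<bar>"
proof -
  have "norm ((\<lambda>r. f r - r *\<^sub>R v) x - (\<lambda>r. f r - r *\<^sub>R v) y) \<le> B * norm (x - y)"
  proof (rule differentiable_bound[OF S _ _ xy])
    fix r assume r: "r \<in> S"
    show "((\<lambda>r. f r - r *\<^sub>R v) has_derivative (\<lambda>h. h *\<^sub>R (f' r - v))) (at r within S)"
      using d[OF r] unfolding has_vector_derivative_def
      by (auto intro!: derivative_eq_intros simp: algebra_simps)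
    show "onorm (\<lambda>h. h *\<^sub>R (f' r - v)) \<le> B"
    proof -
      have "onorm (\<lambda>x::real. x) = 1" by (rule onorm_id)
      then show ?thesis using onorm_scaleR_left[OF bounded_linear_ident, of "f' r - v"] B[OF r] by simp
    qed
  qed
  then show ?thesis by (simp add: algebra_simps)
qed



context curve begin

lemma X1_deriv: "t \<in> I \<Longrightarrow> (X1 has_vector_derivative vd I X1 t) (at t within I)"
  by (rule Sm_deriv[OF ab Sm_X1])
lemma X2_deriv: "t \<in> I \<Longrightarrow> (X2 has_vector_derivative vd I X2 t) (at t within I)"
  by (rule Sm_deriv[OF ab Sm_X2])

lemma cnsts:
  obtains m1 mD B where "m1 > 0" "mD > 0" "B > 0"
    "\<forall>t\<in>I. m1 \<le> norm (cross3 (e t) (X1 t)) \<and> m1 \<le> norm (cross3 (e t) (X2 t))"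
    "\<forall>t\<in>I. mD \<le> \<bar>e t \<bullet> cross3 (X1 t) (X2 t)\<bar>"
    "\<forall>t\<in>I. norm (vd I X1 t) \<le> B \<and> norm (vd I X2 t) \<le> B"
proof -
  have ne: "I \<noteq> {}" using ab by simp
  have cI: "compact I" by simp
  have c1: "continuous_on I (\<lambda>t. cross3 (e t) (X1 t))" by (rule Sm_cont[OF Sm_cross[OF Sm_e Sm_X1]])
  have c2: "continuous_on I (\<lambda>t. cross3 (e t) (X2 t))" by (rule Sm_cont[OF Sm_cross[OF Sm_e Sm_X2]])
  have c3: "continuous_on I (\<lambda>t. e t \<bullet> cross3 (X1 t) (X2 t))" by (rule Sm_cont[OF Sm_inner[OF Sm_e Sm_cross[OF Sm_X1 Sm_X2]]])
  have c4: "continuous_on I (vd I X1)" by (rule Sm_cont[OF Sm_vd[OF ab Sm_X1]])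
  have c5: "continuous_on I (vd I X2)" by (rule Sm_cont[OF Sm_vd[OF ab Sm_X2]])
  have "continuous_on I (\<lambda>t. min (norm (cross3 (e t) (X1 t))) (norm (cross3 (e t) (X2 t))))"
    by (rule continuous_on_min[OF continuous_on_norm[OF c1] continuous_on_norm[OF c2]])
  from continuous_attains_inf[OF cI ne this]
  obtain t1 where t1: "t1 \<in> I" "\<forall>t\<in>I. min (norm (cross3 (e t1) (X1 t1))) (norm (cross3 (e t1) (X2 t1))) \<le> min (norm (cross3 (e t) (X1 t))) (norm (cross3 (e t) (X2 t)))"
    by blast
  have "continuous_on I (\<lambda>t. \<bar>e t \<bullet> cross3 (X1 t) (X2 t)\<bar>)"
    by (rule continuous_on_rabs[OF c3])
  from continuous_attains_inf[OF cI ne this]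
  obtain t2 where t2: "t2 \<in> I" "\<forall>t\<in>I. \<bar>e t2 \<bullet> cross3 (X1 t2) (X2 t2)\<bar> \<le> \<bar>e t \<bullet> cross3 (X1 t) (X2 t)\<bar>"
    by blast
  have "continuous_on I (\<lambda>t. norm (vd I X1 t) + norm (vd I X2 t))"
    by (rule continuous_on_add[OF continuous_on_norm[OF c4] continuous_on_norm[OF c5]])
  from continuous_attains_sup[OF cI ne this]
  obtain t3 where t3: "t3 \<in> I" "\<forall>t\<in>I. norm (vd I X1 t) + norm (vd I X2 t) \<le> norm (vd I X1 t3) + norm (vd I X2 t3)"
    by blast
  let ?m1 = "min (norm (cross3 (e t1) (X1 t1))) (norm (cross3 (e t1) (X2 t1)))"
  let ?mD = "\<bar>e t2 \<bullet> cross3 (X1 t2) (X2 t2)\<bar>"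
  let ?B = "norm (vd I X1 t3) + norm (vd I X2 t3) + 1"
  have "?m1 > 0" using X_props(2)[OF t1(1), of \<alpha>] X_props(2)[OF t1(1), of "\<lambda>t. - \<alpha> t"] beta_sin by simp
  moreover have "?mD > 0" using X_triple[OF t2(1)] by simp
  moreover have "?B > 0" by (simp add: add_nonneg_pos)
  moreover have "\<forall>t\<in>I. ?m1 \<le> norm (cross3 (e t) (X1 t)) \<and> ?m1 \<le> norm (cross3 (e t) (X2 t))"
    using t1(2) by (metis min.bounded_iff)
  moreover have "\<forall>t\<in>I. norm (vd I X1 t) \<le> ?B \<and> norm (vd I X2 t) \<le> ?B"
    using t3(2) by (smt (verit) norm_ge_zero)
  ultimately show ?thesis using that t2(2) by blast
qed

lemma lipX:
  assumes "\<forall>t\<in>I. norm (vd I X1 t) \<le> B \<and> norm (vd I X2 t) \<le> B" "Y \<in> {X1, X2}" "s \<in> I" "s' \<in> I"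
  shows "norm (Y s - Y s') \<le> B * \<bar>s - s'\<bar>"
proof -
  have "norm (Y s - Y s' - (s - s') *\<^sub>R 0) \<le> B * \<bar>s - s'\<bar>"
  proof (cases "Y = X1")
    case True
    show ?thesis unfolding True
      by (rule MV_bound[of I X1 "vd I X1"]) (use assms X1_deriv in auto)
  next
    case False
    then have "Y = X2" using assms(2) by auto
    then show ?thesis
      by (simp only:) (rule MV_bound[of I X2 "vd I X2"], use assms X2_deriv in auto)
  qed
  then show ?thesis by simp
qed

lemma mv_c:
  assumes s: "s \<in> I" "s' \<in> I" and om: "\<And>r. r \<in> I \<Longrightarrow> \<bar>r - s'\<bar> \<le> \<bar>s - s'\<bar> \<Longrightarrow> norm (e r - e s') \<le> \<omega>"
  shows "norm (c s - c s' - (s - s') *\<^sub>R e s') \<le> \<omega> * \<bar>s - s'\<bar>"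
proof -
  let ?S = "{min s s'..max s s'}"
  have sub: "?S \<subseteq> I" using s by auto
  show ?thesis
  proof (rule MV_bound[of ?S c e])
    show "convex ?S" by (rule convex_real_interval)
    fix r assume r: "r \<in> ?S"
    then show "(c has_vector_derivative e r) (at r within ?S)"
      using c_deriv sub by (meson has_vector_derivative_within_subset subsetD)
    show "norm (e r - e s') \<le> \<omega>" using r sub by (intro om) auto
  qed auto
qed

lemma far:
  assumes "\<eta> > 0"
  obtains \<mu> where "\<mu> > 0" "\<forall>s\<in>I. \<forall>s'\<in>I. \<eta> \<le> \<bar>s - s'\<bar> \<longrightarrow> \<mu> \<le> norm (c s - c s')"
proof -
  let ?K = "{p \<in> I \<times> I. \<eta> \<le> \<bar>fst p - snd p\<bar>}"
  have cK: "compact ?K"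
  proof -
    have "continuous_on UNIV (\<lambda>p::real\<times>real. \<bar>fst p - snd p\<bar>)"
      by (intro continuous_on_rabs continuous_on_diff continuous_on_fst continuous_on_snd continuous_on_id)
    then have "closed {p::real\<times>real. \<eta> \<le> \<bar>fst p - snd p\<bar>}"
      by (intro closed_Collect_le continuous_on_const)
    moreover have "?K = (I \<times> I) \<inter> {p::real\<times>real. \<eta> \<le> \<bar>fst p - snd p\<bar>}" by auto
    moreover have "compact (I \<times> I)" by (intro compact_Times compact_Icc)
    ultimately show ?thesis by (simp only:) (rule compact_Int_closed)
  qed
  show ?thesis
  proof (cases "?K = {}")
    case True
    show ?thesis
    proof (rule that[of 1])
      show "\<forall>s\<in>I. \<forall>s'\<in>I. \<eta> \<le> \<bar>s - s'\<bar> \<longrightarrow> 1 \<le> norm (c s - c s')"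
      proof (intro ballI impI)
        fix s s' assume "s \<in> I" "s' \<in> I" "\<eta> \<le> \<bar>s - s'\<bar>"
        then have "(s, s') \<in> ?K" by simp
        then show "1 \<le> norm (c s - c s')" using True by blast
      qed
    qed simp
  next
    case False
    have cc: "continuous_on I c" by (rule Sm_cont[OF Sm_c])
    have f1: "continuous_on ?K (\<lambda>p. c (fst p))"
      by (rule continuous_on_compose2[OF cc continuous_on_fst[OF continuous_on_id]]) auto
    have f2: "continuous_on ?K (\<lambda>p. c (snd p))"
      by (rule continuous_on_compose2[OF cc continuous_on_snd[OF continuous_on_id]]) auto
    have "continuous_on ?K (\<lambda>p. norm (c (fst p) - c (snd p)))"
      by (rule continuous_on_norm[OF continuous_on_diff[OF f1 f2]])
    from continuous_attains_inf[OF cK False this]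
    obtain p where p: "p \<in> ?K" "\<forall>q\<in>?K. norm (c (fst p) - c (snd p)) \<le> norm (c (fst q) - c (snd q))"
      by blast
    have pI: "fst p \<in> I" "snd p \<in> I" using p(1) by (auto simp: mem_Times_iff)
    have "\<eta> \<le> \<bar>fst p - snd p\<bar>" using p(1) by blast
    then have "fst p \<noteq> snd p" using assms by auto
    then have "c (fst p) \<noteq> c (snd p)" using inj_on_contraD[OF injc _ pI] by blast
    then have pos: "norm (c (fst p) - c (snd p)) > 0" by simp
    have key: "\<forall>s\<in>I. \<forall>s'\<in>I. \<eta> \<le> \<bar>s - s'\<bar> \<longrightarrow> norm (c (fst p) - c (snd p)) \<le> norm (c s - c s')"
    proof (intro ballI impI)
      fix s s' assume h: "s \<in> I" "s' \<in> I" "\<eta> \<le> \<bar>s - s'\<bar>"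
      then have "(s, s') \<in> ?K" by simp
      from bspec[OF p(2) this] show "norm (c (fst p) - c (snd p)) \<le> norm (c s - c s')" by simp
    qed
    show ?thesis by (rule that[OF pos key])
  qed
qed

end


context curve begin

lemma aux3: "(x::real) + y \<le> x / 3 \<Longrightarrow> 0 \<le> x \<Longrightarrow> 0 \<le> y \<Longrightarrow> x = 0 \<and> y = 0" by linarith
lemma aux2: "(x::real) + y + z \<le> x / 2 \<Longrightarrow> 0 \<le> x \<Longrightarrow> 0 \<le> y \<Longrightarrow> 0 \<le> z \<Longrightarrow> x = 0 \<and> y = 0 \<and> z = 0" by linarith

lemma W_unit: "W \<in> {X1, X2} \<Longrightarrow> t \<in> I \<Longrightarrow> norm (W t) = 1"
  using X_props(1) by blast

lemma small:
  obtains \<epsilon>0 where "\<epsilon>0 > 0"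
    "\<forall>s\<in>I. \<forall>s'\<in>I. \<forall>v v' Y Z. \<bar>v\<bar> \<le> \<epsilon>0 \<and> \<bar>v'\<bar> \<le> \<epsilon>0 \<and> Y \<in> {X1, X2} \<and> Z \<in> {X1, X2} \<and>
        c s + v *\<^sub>R Y s = c s' + v' *\<^sub>R Z s' \<longrightarrow> s = s' \<and> v = v'"
    "\<forall>s\<in>I. \<forall>v. \<bar>v\<bar> \<le> \<epsilon>0 \<longrightarrow> cross3 (e s + v *\<^sub>R vd I X1 s) (X1 s) \<noteq> 0 \<and> cross3 (e s + v *\<^sub>R vd I X2 s) (X2 s) \<noteq> 0"
proof -
  obtain m1 mD B where C: "m1 > 0" "mD > 0" "B > 0"
    "\<forall>t\<in>I. m1 \<le> norm (cross3 (e t) (X1 t)) \<and> m1 \<le> norm (cross3 (e t) (X2 t))"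
    "\<forall>t\<in>I. mD \<le> \<bar>e t \<bullet> cross3 (X1 t) (X2 t)\<bar>"
    "\<forall>t\<in>I. norm (vd I X1 t) \<le> B \<and> norm (vd I X2 t) \<le> B"
    by (rule cnsts)
  define m where "m = min m1 mD"
  have mpos: "m > 0" using C(1,2) by (simp add: m_def)
  have mm1: "m \<le> m1" "m \<le> mD" by (simp_all add: m_def)
  have "uniformly_continuous_on I e"
    by (rule compact_uniformly_continuous[OF Sm_cont[OF Sm_e] compact_Icc])
  then obtain \<eta> where eta: "\<eta> > 0" "\<forall>x\<in>I. \<forall>x'\<in>I. dist x' x < \<eta> \<longrightarrow> dist (e x') (e x) < m / 12"
    unfolding uniformly_continuous_on_def using mpos by (metis divide_pos_pos zero_less_numeral)
  obtain \<mu> where mu: "\<mu> > 0" "\<forall>s\<in>I. \<forall>s'\<in>I. \<eta> \<le> \<bar>s - s'\<bar> \<longrightarrow> \<mu> \<le> norm (c s - c s')"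
    by (rule far[OF eta(1)])
  define \<epsilon>0 where "\<epsilon>0 = min (\<mu> / 4) (m / (12 * B))"
  have e0pos: "\<epsilon>0 > 0" using mu(1) mpos C(3) by (simp add: \<epsilon>0_def)
  have e0B: "\<epsilon>0 * B \<le> m / 12"
  proof -
    have "\<epsilon>0 \<le> m / (12 * B)" by (simp add: \<epsilon>0_def)
    then have "\<epsilon>0 * B \<le> m / (12 * B) * B" using C(3) by (intro mult_right_mono) auto
    also have "\<dots> = m / 12" using C(3) by simp
    finally show ?thesis .
  qed
  have e0mu: "2 * \<epsilon>0 < \<mu>" using mu(1) by (simp add: \<epsilon>0_def)
  have P1: "\<forall>s\<in>I. \<forall>s'\<in>I. \<forall>v v' Y Z. \<bar>v\<bar> \<le> \<epsilon>0 \<and> \<bar>v'\<bar> \<le> \<epsilon>0 \<and> Y \<in> {X1, X2} \<and> Z \<in> {X1, X2} \<and>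
        c s + v *\<^sub>R Y s = c s' + v' *\<^sub>R Z s' \<longrightarrow> s = s' \<and> v = v'"
  proof (intro ballI allI impI)
    fix s s' v v' Y Z
    assume s: "s \<in> I" "s' \<in> I"
    assume H: "\<bar>v\<bar> \<le> \<epsilon>0 \<and> \<bar>v'\<bar> \<le> \<epsilon>0 \<and> Y \<in> {X1, X2} \<and> Z \<in> {X1, X2} \<and> c s + v *\<^sub>R Y s = c s' + v' *\<^sub>R Z s'"
    then have v: "\<bar>v\<bar> \<le> \<epsilon>0" "\<bar>v'\<bar> \<le> \<epsilon>0" and YZ: "Y \<in> {X1, X2}" "Z \<in> {X1, X2}"
      and eq0: "c s + v *\<^sub>R Y s = c s' + v' *\<^sub>R Z s'" by auto
    have eq: "c s - c s' = v' *\<^sub>R Z s' - v *\<^sub>R Y s" using eq0 by (simp add: algebra_simps)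
    have uY: "norm (Y s) = 1" "norm (Y s') = 1" using W_unit[OF YZ(1)] s by auto
    have uZ: "norm (Z s') = 1" using W_unit[OF YZ(2)] s by auto
    have ue: "norm (e s') = 1" using e_unit s by auto
    show "s = s' \<and> v = v'"
    proof (cases "\<eta> \<le> \<bar>s - s'\<bar>")
      case True
      then have "\<mu> \<le> norm (c s - c s')" using mu(2) s by blast
      also have "\<dots> \<le> norm (v' *\<^sub>R Z s') + norm (v *\<^sub>R Y s)" unfolding eq by (rule norm_triangle_ineq4)
      also have "\<dots> = \<bar>v'\<bar> + \<bar>v\<bar>" using uY uZ by simp
      finally show ?thesis using v e0mu by linarith
    next
      case False
      let ?d = "s - s'"
      define R where "R = c s - c s' - ?d *\<^sub>R e s'"
      define Q where "Q = v *\<^sub>R (Y s - Y s')"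
      have nR: "norm R \<le> m / 12 * \<bar>?d\<bar>" unfolding R_def
      proof (rule mv_c[OF s])
        fix r assume r: "r \<in> I" "\<bar>r - s'\<bar> \<le> \<bar>s - s'\<bar>"
        then have "dist r s' < \<eta>" using False by (simp add: dist_real_def)
        then have "dist (e r) (e s') < m / 12" using eta(2) r(1) s(2) by blast
        then show "norm (e r - e s') \<le> m / 12" by (simp add: dist_norm)
      qed
      have nQ: "norm Q \<le> \<epsilon>0 * B * \<bar>?d\<bar>"
      proof -
        have "norm Q = \<bar>v\<bar> * norm (Y s - Y s')" by (simp add: Q_def)
        also have "\<dots> \<le> \<epsilon>0 * (B * \<bar>?d\<bar>)"
          using lipX[OF C(6) YZ(1) s] v(1) by (intro mult_mono) auto
        finally show ?thesis by (simp add: mult.assoc)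
      qed
      have key: "?d *\<^sub>R e s' + v *\<^sub>R Y s' - v' *\<^sub>R Z s' = - (R + Q)"
        unfolding R_def Q_def using eq by (simp add: algebra_simps)
      have nV: "norm (?d *\<^sub>R e s' + v *\<^sub>R Y s' - v' *\<^sub>R Z s') \<le> m / 6 * \<bar>?d\<bar>"
      proof -
        have "norm (?d *\<^sub>R e s' + v *\<^sub>R Y s' - v' *\<^sub>R Z s') \<le> norm R + norm Q"
          unfolding key norm_minus_cancel by (rule norm_triangle_ineq)
        also have "\<dots> \<le> m / 12 * \<bar>?d\<bar> + m / 12 * \<bar>?d\<bar>"
          using nR nQ e0B by (smt (verit) abs_ge_zero mult_right_mono)
        finally show ?thesis by simp
      qed
      show ?thesis
      proof (cases "Y = Z")
        case True
        have "m1 \<le> norm (cross3 (e s') (Y s'))" using C(4) s(2) YZ(1) by auto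
        then have mle: "m \<le> norm (cross3 (e s') (Y s'))" using mm1 by linarith
        have "m * (\<bar>?d\<bar> + \<bar>v - v'\<bar>) \<le> 2 * norm (?d *\<^sub>R e s' + (v - v') *\<^sub>R Y s')"
          by (rule LB2[OF ue uY(2) mle])
        also have "?d *\<^sub>R e s' + (v - v') *\<^sub>R Y s' = ?d *\<^sub>R e s' + v *\<^sub>R Y s' - v' *\<^sub>R Z s'"
          using True by (simp add: algebra_simps)
        finally have "m * (\<bar>?d\<bar> + \<bar>v - v'\<bar>) \<le> m * (\<bar>?d\<bar> / 3)" using nV by simp
        then have "\<bar>?d\<bar> + \<bar>v - v'\<bar> \<le> \<bar>?d\<bar> / 3" using mpos by simp
        then have "\<bar>?d\<bar> = 0 \<and> \<bar>v - v'\<bar> = 0" by (rule aux3) simp_all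
        then show ?thesis by simp
      next
        case False
        have "mD \<le> \<bar>e s' \<bullet> cross3 (Y s') (Z s')\<bar>"
        proof -
          have "(Y = X1 \<and> Z = X2) \<or> (Y = X2 \<and> Z = X1)" using YZ False by auto
          moreover have "\<bar>e s' \<bullet> cross3 (X2 s') (X1 s')\<bar> = \<bar>e s' \<bullet> cross3 (X1 s') (X2 s')\<bar>"
            by (metis cross_skew inner_minus_right abs_minus_cancel)
          ultimately show ?thesis using C(5) s(2) by auto
        qed
        then have mle: "m \<le> \<bar>e s' \<bullet> cross3 (Y s') (Z s')\<bar>" using mm1 by linarith
        have "m * (\<bar>?d\<bar> + \<bar>v\<bar> + \<bar>- v'\<bar>) \<le> 3 * norm (?d *\<^sub>R e s' + v *\<^sub>R Y s' + (- v') *\<^sub>R Z s')"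
          by (rule LB3[OF ue uY(2) uZ mle])
        also have "?d *\<^sub>R e s' + v *\<^sub>R Y s' + (- v') *\<^sub>R Z s' = ?d *\<^sub>R e s' + v *\<^sub>R Y s' - v' *\<^sub>R Z s'"
          by simp
        finally have "m * (\<bar>?d\<bar> + \<bar>v\<bar> + \<bar>v'\<bar>) \<le> m * (\<bar>?d\<bar> / 2)" using nV by simp
        then have "\<bar>?d\<bar> + \<bar>v\<bar> + \<bar>v'\<bar> \<le> \<bar>?d\<bar> / 2" using mpos by simp
        then have "\<bar>?d\<bar> = 0 \<and> \<bar>v\<bar> = 0 \<and> \<bar>v'\<bar> = 0" by (rule aux2) simp_all
        then show ?thesis by simp
      qed
    qed
  qed
  have nz: "cross3 (e s + v *\<^sub>R vd I W s) (W s) \<noteq> 0"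
    if W: "W \<in> {X1, X2}" and s: "s \<in> I" and v: "\<bar>v\<bar> \<le> \<epsilon>0" for W s v
  proof -
    have m1W: "m1 \<le> norm (cross3 (e s) (W s))" using C(4) s W by auto
    have BW: "norm (vd I W s) \<le> B" using C(6) s W by auto
    have uW: "norm (W s) = 1" using W_unit[OF W s] .
    have "norm (cross3 (vd I W s) (W s)) \<le> B" using norm_cross_le[of "vd I W s" "W s"] uW BW by simp
    then have bd: "norm (v *\<^sub>R cross3 (vd I W s) (W s)) \<le> \<epsilon>0 * B"
      using v C(3) by (simp add: mult_mono)
    have eqc: "cross3 (e s + v *\<^sub>R vd I W s) (W s) = cross3 (e s) (W s) + v *\<^sub>R cross3 (vd I W s) (W s)"
      by (simp add: cross_add_left cross_mult_left)
    have tri: "norm (cross3 (e s) (W s)) - norm (v *\<^sub>R cross3 (vd I W s) (W s)) \<le> norm (cross3 (e s) (W s) + v *\<^sub>R cross3 (vd I W s) (W s))"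
      by (metis norm_diff_ineq norm_minus_cancel diff_minus_eq_add)
    have "m1 - \<epsilon>0 * B \<le> norm (cross3 (e s) (W s) + v *\<^sub>R cross3 (vd I W s) (W s))" using tri bd m1W by linarith
    then have "m1 - \<epsilon>0 * B \<le> norm (cross3 (e s + v *\<^sub>R vd I W s) (W s))" by (simp only: eqc)
    moreover have "m1 - \<epsilon>0 * B > 0" using e0B mm1 mpos by linarith
    ultimately show ?thesis by auto
  qed
  have P2: "\<forall>s\<in>I. \<forall>v. \<bar>v\<bar> \<le> \<epsilon>0 \<longrightarrow> cross3 (e s + v *\<^sub>R vd I X1 s) (X1 s) \<noteq> 0 \<and> cross3 (e s + v *\<^sub>R vd I X2 s) (X2 s) \<noteq> 0"
    using nz by blast
  show ?thesis by (rule that[OF e0pos P1 P2])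
qed

end


lemma lower2:
  fixes a1 a2 :: "real^3"
  assumes "cross3 a1 a2 \<noteq> 0"
  shows "\<exists>m>0. \<forall>z::real\<times>real. m * norm z \<le> norm (fst z *\<^sub>R a1 + snd z *\<^sub>R a2)"
proof -
  let ?N = "cross3 a1 a2"
  let ?S = "norm a1 + norm a2 + 1"
  have Spos: "?S > 0" by (simp add: add_nonneg_pos)
  have Npos: "norm ?N > 0" using assms by simp
  have "norm ?N / ?S * norm z \<le> norm (fst z *\<^sub>R a1 + snd z *\<^sub>R a2)" for z :: "real\<times>real"
  proof -
    obtain h k where z: "z = (h, k)" by (cases z)
    let ?V = "h *\<^sub>R a1 + k *\<^sub>R a2"
    have "cross3 ?V a2 = h *\<^sub>R ?N" by (simp add: cross_add_left cross_mult_left)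
    then have 1: "\<bar>h\<bar> * norm ?N \<le> norm ?V * norm a2" using norm_cross_le[of ?V a2] by simp
    have "cross3 a1 ?V = k *\<^sub>R ?N" by (simp add: cross_add_right cross_mult_right)
    then have 2: "\<bar>k\<bar> * norm ?N \<le> norm a1 * norm ?V" using norm_cross_le[of a1 ?V] by simp
    have nz: "norm z \<le> \<bar>h\<bar> + \<bar>k\<bar>" using norm_Pair_le[of h k] z by simp
    have "norm ?N * norm z \<le> norm ?N * (\<bar>h\<bar> + \<bar>k\<bar>)" using nz by (simp add: mult_left_mono)
    also have "\<dots> \<le> norm ?V * (norm a1 + norm a2)" using 1 2 by (simp add: algebra_simps)
    also have "\<dots> \<le> norm ?V * ?S" by (simp add: mult_left_mono)
    finally have "norm ?N * norm z \<le> norm ?V * ?S" .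
    then have "norm ?N * norm z / ?S \<le> norm ?V" using Spos by (simp add: divide_le_eq)
    then show ?thesis using z by simp
  qed
  moreover have "norm ?N / ?S > 0" using Npos Spos by simp
  ultimately show ?thesis by blast
qed

lemma LL:
  assumes dA: "(A has_derivative D) (at p0 within H)" and Dm: "\<forall>z. m * norm z \<le> norm (D z)"
    and m: "m > 0" and eta: "\<eta> > 0"
  shows "\<exists>d>0. \<forall>p\<in>H. norm (p - p0) < d \<longrightarrow>
     norm (p - p0) \<le> (2 / m) * norm (A p - A p0) \<and> norm (A p - A p0 - D (p - p0)) \<le> \<eta> * norm (p - p0)"
proof -
  have "min \<eta> (m/2) > 0" using m eta by simp
  then obtain d where d: "d > 0" "\<forall>y\<in>H. norm (y - p0) < d \<longrightarrow> norm (A y - A p0 - D (y - p0)) \<le> min \<eta> (m/2) * norm (y - p0)"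
    using dA unfolding has_derivative_within_alt by blast
  have "norm (p - p0) \<le> (2 / m) * norm (A p - A p0) \<and> norm (A p - A p0 - D (p - p0)) \<le> \<eta> * norm (p - p0)"
    if p: "p \<in> H" "norm (p - p0) < d" for p
  proof -
    have R: "norm (A p - A p0 - D (p - p0)) \<le> min \<eta> (m/2) * norm (p - p0)" using d(2) p by blast
    have R1: "norm (A p - A p0 - D (p - p0)) \<le> \<eta> * norm (p - p0)"
      using R by (meson min.cobounded1 mult_right_mono norm_ge_zero order_trans)
    have R2: "norm (A p - A p0 - D (p - p0)) \<le> m / 2 * norm (p - p0)"
      using R by (meson min.cobounded2 mult_right_mono norm_ge_zero order_trans)
    have "norm (D (p - p0)) - norm (A p - A p0 - D (p - p0)) \<le> norm (A p - A p0)"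
      by (metis add_diff_cancel_left' diff_add_cancel norm_diff_ineq norm_triangle_ineq4 add.commute)
    then have "m * norm (p - p0) - m / 2 * norm (p - p0) \<le> norm (A p - A p0)"
      using Dm R2 by (smt (verit))
    then have "m / 2 * norm (p - p0) \<le> norm (A p - A p0)" by simp
    then have "norm (p - p0) \<le> (2 / m) * norm (A p - A p0)" using m by (simp add: field_simps)
    then show ?thesis using R1 by simp
  qed
  then show ?thesis using d(1) by blast
qed

lemma triple_expand:
  fixes e X Y z :: "real^3"
  shows "(e \<bullet> cross3 X Y) *\<^sub>R z = (z \<bullet> e) *\<^sub>R cross3 X Y + (z \<bullet> X) *\<^sub>R cross3 Y e + (z \<bullet> Y) *\<^sub>R cross3 e X"
  by (simp add: vec_eq_iff forall_3 cross_components inner_vec_def sum_3 algebra_simps)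

lemma perp3_zero:
  fixes e X Y z :: "real^3"
  assumes "e \<bullet> cross3 X Y \<noteq> 0" "z \<bullet> e = 0" "z \<bullet> X = 0" "z \<bullet> Y = 0"
  shows "z = 0"
  using triple_expand[of e X Y z] assms by simp


lemma half_lt: "(x::real) \<le> q \<Longrightarrow> 0 < q \<Longrightarrow> x / 2 < q" by linarith

lemma dir_lemma:
  fixes A :: "real \<times> real \<Rightarrow> real^3" and G :: "real^3 \<Rightarrow> real \<times> real"
  assumes dA: "(A has_derivative (\<lambda>z. fst z *\<^sub>R a1 + snd z *\<^sub>R a2)) (at p1 within H)"
    and N: "cross3 a1 a2 \<noteq> 0"
    and Gc: "\<forall>d>0. \<exists>\<rho>>0. \<forall>y\<in>Ys. norm (y - A p1) < \<rho> \<longrightarrow> norm (G y - p1) < d"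
    and GH: "\<exists>r0>0. \<forall>y\<in>Ys. norm (G y - p1) < r0 \<longrightarrow> G y \<in> H \<and> A (G y) = y"
    and fam: "\<forall>\<eta>>0. \<exists>d>0. \<forall>v. 0 < v \<and> v < d \<longrightarrow> y v \<in> Ys \<and> norm (y v - A p1 - v *\<^sub>R w) \<le> \<eta> * v"
  shows "w \<bullet> cross3 a1 a2 = 0"
proof (rule ccontr)
  let ?N = "cross3 a1 a2"
  let ?D = "\<lambda>z::real\<times>real. fst z *\<^sub>R a1 + snd z *\<^sub>R a2"
  assume wN: "w \<bullet> ?N \<noteq> 0"
  obtain m where m: "m > 0" "\<forall>z. m * norm z \<le> norm (?D z)" using lower2[OF N] by blast
  define C where "C = norm ?N * ((2 / m) * (norm w + 1) + 1)"
  have Cpos: "C > 0" using N m(1) by (simp add: C_def add_nonneg_pos)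
  define \<eta> where "\<eta> = min 1 (\<bar>w \<bullet> ?N\<bar> / (2 * C))"
  have eta: "\<eta> > 0" "\<eta> \<le> 1" "\<eta> * C \<le> \<bar>w \<bullet> ?N\<bar> / 2"
  proof -
    show "\<eta> > 0" using wN Cpos by (simp add: \<eta>_def)
    show "\<eta> \<le> 1" by (simp add: \<eta>_def)
    have "\<eta> \<le> \<bar>w \<bullet> ?N\<bar> / (2 * C)" by (simp add: \<eta>_def)
    then have "\<eta> * C \<le> \<bar>w \<bullet> ?N\<bar> / (2 * C) * C" using Cpos by (intro mult_right_mono) auto
    then show "\<eta> * C \<le> \<bar>w \<bullet> ?N\<bar> / 2" using Cpos by simp
  qed
  obtain d1 where d1: "d1 > 0" "\<forall>p\<in>H. norm (p - p1) < d1 \<longrightarrow>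
     norm (p - p1) \<le> (2 / m) * norm (A p - A p1) \<and> norm (A p - A p1 - ?D (p - p1)) \<le> \<eta> * norm (p - p1)"
    using LL[OF dA m(2) m(1) eta(1)] by blast
  obtain r0 where r0: "r0 > 0" "\<forall>y\<in>Ys. norm (G y - p1) < r0 \<longrightarrow> G y \<in> H \<and> A (G y) = y" using GH by blast
  have "min d1 r0 > 0" using d1(1) r0(1) by simp
  then obtain \<rho> where rho: "\<rho> > 0" "\<forall>y\<in>Ys. norm (y - A p1) < \<rho> \<longrightarrow> norm (G y - p1) < min d1 r0"
    using Gc by blast
  obtain d2 where d2: "d2 > 0" "\<forall>v. 0 < v \<and> v < d2 \<longrightarrow> y v \<in> Ys \<and> norm (y v - A p1 - v *\<^sub>R w) \<le> \<eta> * v"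
    using fam eta(1) by blast
  define v where "v = min d2 (\<rho> / (norm w + 1)) / 2"
  have wp: "norm w + 1 > 0" by (simp add: add_nonneg_pos)
  have v: "0 < v" "v < d2" "v * (norm w + 1) < \<rho>"
  proof -
    have q: "\<rho> / (norm w + 1) > 0" using rho(1) wp by simp
    show "0 < v" using d2(1) q by (simp add: v_def)
    show "v < d2" using d2(1) q by (simp add: v_def)
    have "min d2 (\<rho> / (norm w + 1)) \<le> \<rho> / (norm w + 1)" by simp
    then have "v < \<rho> / (norm w + 1)" using q unfolding v_def by (rule half_lt)
    then show "v * (norm w + 1) < \<rho>" using wp by (simp add: pos_less_divide_eq)
  qed
  have yv: "y v \<in> Ys" and S: "norm (y v - A p1 - v *\<^sub>R w) \<le> \<eta> * v" using d2(2) v by blast+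
  have "\<eta> * v \<le> 1 * v" using eta(2) v(1) by (intro mult_right_mono) auto
  then have Sv: "norm (y v - A p1 - v *\<^sub>R w) \<le> v" using S by simp
  have ny: "norm (y v - A p1) \<le> v * (norm w + 1)"
  proof -
    have "y v - A p1 = v *\<^sub>R w + (y v - A p1 - v *\<^sub>R w)" by simp
    then have "norm (y v - A p1) \<le> norm (v *\<^sub>R w) + norm (y v - A p1 - v *\<^sub>R w)"
      by (metis norm_triangle_ineq)
    also have "\<dots> \<le> v * norm w + v" using Sv v(1) by simp
    finally show ?thesis by (simp add: algebra_simps)
  qed
  then have "norm (y v - A p1) < \<rho>" using v(3) by linarith
  then have Gp: "norm (G (y v) - p1) < min d1 r0" using rho(2) yv by blast
  define p where "p = G (y v)"
  have pH: "p \<in> H" and Ap: "A p = y v" using r0(2) yv Gp by (auto simp: p_def)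
  have pd: "norm (p - p1) < d1" using Gp by (simp add: p_def)
  have L1: "norm (p - p1) \<le> (2 / m) * norm (A p - A p1)" and L2: "norm (A p - A p1 - ?D (p - p1)) \<le> \<eta> * norm (p - p1)"
    using d1(2) pH pd by blast+
  define R where "R = A p - A p1 - ?D (p - p1)"
  define S' where "S' = y v - A p1 - v *\<^sub>R w"
  have DN: "?D (p - p1) \<bullet> ?N = 0" by (simp add: inner_add_left dot_cross_self)
  have eqv: "v *\<^sub>R w = R + ?D (p - p1) - S'" unfolding R_def S'_def using Ap by simp
  have "v * (w \<bullet> ?N) = R \<bullet> ?N - S' \<bullet> ?N"
  proof -
    have "v * (w \<bullet> ?N) = (v *\<^sub>R w) \<bullet> ?N" by simp
    also have "\<dots> = R \<bullet> ?N + ?D (p - p1) \<bullet> ?N - S' \<bullet> ?N" unfolding eqv by (simp add: inner_add_left inner_diff_left)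
    finally show ?thesis using DN by simp
  qed
  then have eqn: "\<bar>v * (w \<bullet> ?N)\<bar> = \<bar>R \<bullet> ?N - S' \<bullet> ?N\<bar>" by simp
  have "\<bar>v * (w \<bullet> ?N)\<bar> = v * \<bar>w \<bullet> ?N\<bar>" using v(1) by (simp add: abs_mult)
  then have "v * \<bar>w \<bullet> ?N\<bar> = \<bar>R \<bullet> ?N - S' \<bullet> ?N\<bar>" using eqn by simp
  also have "\<dots> \<le> \<bar>R \<bullet> ?N\<bar> + \<bar>S' \<bullet> ?N\<bar>" by (rule abs_triangle_ineq4)
  also have "\<dots> \<le> norm R * norm ?N + norm S' * norm ?N"
    by (intro add_mono Cauchy_Schwarz_ineq2)
  also have "\<dots> \<le> (\<eta> * ((2 / m) * (v * (norm w + 1)))) * norm ?N + (\<eta> * v) * norm ?N"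
  proof (intro add_mono mult_right_mono)
    have "norm (A p - A p1) \<le> v * (norm w + 1)" using Ap ny by simp
    then have "(2 / m) * norm (A p - A p1) \<le> (2 / m) * (v * (norm w + 1))"
      using m(1) by (intro mult_left_mono) auto
    then have "norm (p - p1) \<le> (2 / m) * (v * (norm w + 1))" using L1 by linarith
    then have "\<eta> * norm (p - p1) \<le> \<eta> * ((2 / m) * (v * (norm w + 1)))"
      using eta(1) by (intro mult_left_mono) auto
    then show "norm R \<le> \<eta> * ((2 / m) * (v * (norm w + 1)))" using L2 unfolding R_def by linarith
    show "norm S' \<le> \<eta> * v" using S by (simp add: S'_def)
  qed auto
  also have "\<dots> = v * (\<eta> * C)" by (simp add: C_def algebra_simps add_divide_distrib)
  also have "\<dots> \<le> v * (\<bar>w \<bullet> ?N\<bar> / 2)" using eta(3) v(1) by (simp add: mult_left_mono)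
  finally have "v * \<bar>w \<bullet> ?N\<bar> \<le> v * (\<bar>w \<bullet> ?N\<bar> / 2)" .
  then have "\<bar>w \<bullet> ?N\<bar> \<le> \<bar>w \<bullet> ?N\<bar> / 2" using v(1) by simp
  then show False using wN by simp
qed

lemma isom_onto:
  fixes T :: "real^3 \<Rightarrow> real^3"
  assumes C: "compact C" and T: "\<forall>x y. dist (T x) (T y) = dist x y" and sub: "T ` C \<subseteq> C"
  shows "T ` C = C"
proof (rule ccontr)
  assume "T ` C \<noteq> C"
  then obtain y where y: "y \<in> C" "y \<notin> T ` C" using sub by blast
  have cT: "continuous_on C T" unfolding continuous_on_iff
  proof (intro ballI allI impI)
    fix x and \<epsilon>::real assume "\<epsilon> > 0"
    then show "\<exists>\<delta>>0. \<forall>x'\<in>C. dist x' x < \<delta> \<longrightarrow> dist (T x') (T x) < \<epsilon>" using T by (intro exI[of _ \<epsilon>]) auto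
  qed
  have cTC: "compact (T ` C)" by (rule compact_continuous_image[OF cT C])
  have ne: "T ` C \<noteq> {}" using y(1) by blast
  define d where "d = infdist y (T ` C)"
  have dpos: "d > 0" unfolding d_def using infdist_pos_not_in_closed[OF compact_imp_closed[OF cTC] ne y(2)] .
  have dle: "\<And>z. z \<in> T ` C \<Longrightarrow> d \<le> dist y z" unfolding d_def by (rule infdist_le)
  define x where "x n = (T ^^ n) y" for n
  have xC: "x n \<in> C" for n
  proof (induction n)
    case 0 then show ?case using y(1) by (simp add: x_def)
  next
    case (Suc n) then show ?case using sub by (auto simp: x_def)
  qed
  have xTC: "x (Suc n) \<in> T ` C" for n using xC[of n] by (simp add: x_def)
  have dshift: "dist (x (k + j)) (x j) = dist (x k) y" for k j
  proof (induction j)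
    case 0 then show ?case by (simp add: x_def)
  next
    case (Suc j)
    have "dist (x (k + Suc j)) (x (Suc j)) = dist (T (x (k + j))) (T (x j))" by (simp add: x_def)
    also have "\<dots> = dist (x (k + j)) (x j)" using T by simp
    finally show ?case using Suc by simp
  qed
  have sep: "d \<le> dist (x i) (x j)" if "j < i" for i j
  proof -
    obtain k where "i = Suc (j + k)" using \<open>j < i\<close> less_iff_Suc_add by blast
    then have k: "i = Suc k + j" by simp
    have "dist (x i) (x j) = dist (x (Suc k)) y" using dshift[of "Suc k" j] k by simp
    also have "\<dots> \<ge> d" using dle[OF xTC[of k]] by (simp add: dist_commute)
    finally show ?thesis .
  qed
  obtain l r where lr: "l \<in> C" "strict_mono (r :: nat \<Rightarrow> nat)" "(x \<circ> r) \<longlonglongrightarrow> l"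
    using seq_compactE[OF compact_imp_seq_compact[OF C]] xC by blast
  have "Cauchy (x \<circ> r)" by (rule LIMSEQ_imp_Cauchy[OF lr(3)])
  then obtain M where M: "\<forall>m\<ge>M. \<forall>n\<ge>M. norm ((x \<circ> r) m - (x \<circ> r) n) < d" using CauchyD dpos by blast
  have "norm ((x \<circ> r) (Suc M) - (x \<circ> r) M) < d" using M[rule_format, of "Suc M" M] by simp
  then have "norm (x (r (Suc M)) - x (r M)) < d" by simp
  moreover have "r M < r (Suc M)" using lr(2) by (simp add: strict_mono_Suc_iff)
  ultimately show False using sep[of "r M" "r (Suc M)"] by (simp add: dist_norm)
qed



lemma isom_L:
  fixes T :: "real^3 \<Rightarrow> real^3"
  assumes "isometry3 T" and L_def: "L = (\<lambda>x. T x - T 0)"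
  shows "orthogonal_transformation L" "\<And>x y. T y - T x = L (y - x)" "\<And>x. norm (L x) = norm x"
    "\<And>x y. L x \<bullet> L y = x \<bullet> y"
proof -
  have d: "\<forall>x y. dist (T x) (T y) = dist x y" using assms(1) by (simp add: isometry3_def)
  have "L 0 = 0" "\<forall>x y. dist (L x) (L y) = dist x y" using d by (simp_all add: L_def dist_norm)
  then show ot: "orthogonal_transformation L" using orthogonal_transformation_isometry by blast
  then have lin: "linear L" by (rule orthogonal_transformation_linear)
  show "T y - T x = L (y - x)" for x y
    using linear_diff[OF lin, of y x] by (simp add: L_def)
  show "L x \<bullet> L y = x \<bullet> y" for x y using ot by (simp add: orthogonal_transformation_def)
  show "norm (L x) = norm x" for x using ot by (simp add: orthogonal_transformation_def norm_eq_sqrt_inner)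
qed

context curve begin

lemma psi_eq: "origami_psi I c \<alpha> p = c (fst p) + snd p *\<^sub>R (if 0 \<le> snd p then X2 (fst p) else X1 (fst p))"
  by (cases p) (simp add: origami_psi_def strip_def)
lemma phi_eq: "origami_phi I c \<alpha> p = c (fst p) + snd p *\<^sub>R (if 0 \<le> snd p then X1 (fst p) else X2 (fst p))"
  by (cases p) (simp add: origami_phi_def strip_def)

lemma W_deriv: "W \<in> {X1, X2} \<Longrightarrow> t \<in> I \<Longrightarrow> (W has_vector_derivative vd I W t) (at t within I)"
  using X1_deriv X2_deriv by blast

lemma W_cont: "W \<in> {X1, X2} \<Longrightarrow> continuous_on I W"
  using Sm_cont[OF Sm_X1] Sm_cont[OF Sm_X2] by blast

lemma comp_fst_deriv:
  fixes f :: "real \<Rightarrow> real^3" and p0 :: "real \<times> real"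
  assumes "(f has_vector_derivative f') (at (fst p0) within I)" "\<forall>p\<in>H. fst p \<in> I"
  shows "((\<lambda>p. f (fst p)) has_derivative (\<lambda>z. fst z *\<^sub>R f')) (at p0 within H)"
proof -
  have "fst ` H \<subseteq> I" using assms(2) by auto
  then have g: "(f has_derivative (\<lambda>x. x *\<^sub>R f')) (at (fst p0) within fst ` H)"
    using assms(1) unfolding has_vector_derivative_def by (rule has_derivative_subset[rotated])
  have f: "((\<lambda>p::real\<times>real. fst p) has_derivative (\<lambda>z. fst z)) (at p0 within H)"
    by (rule has_derivative_fst[OF has_derivative_ident])
  show ?thesis using has_derivative_in_compose[OF f g] by simp
qed

lemma sheet_deriv:
  fixes p0 :: "real \<times> real"
  assumes W: "W \<in> {X1, X2}" and p0: "p0 \<in> H" and H: "\<forall>p\<in>H. fst p \<in> I"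
  shows "((\<lambda>p. c (fst p) + snd p *\<^sub>R W (fst p)) has_derivative
     (\<lambda>z. fst z *\<^sub>R (e (fst p0) + snd p0 *\<^sub>R vd I W (fst p0)) + snd z *\<^sub>R W (fst p0))) (at p0 within H)"
proof -
  have s0: "fst p0 \<in> I" using H p0 by blast
  have dc: "((\<lambda>p. c (fst p)) has_derivative (\<lambda>z. fst z *\<^sub>R e (fst p0))) (at p0 within H)"
    by (rule comp_fst_deriv[OF c_deriv[OF s0] H])
  have dW: "((\<lambda>p. W (fst p)) has_derivative (\<lambda>z. fst z *\<^sub>R vd I W (fst p0))) (at p0 within H)"
    by (rule comp_fst_deriv[OF W_deriv[OF W s0] H])
  have ds: "((\<lambda>p::real\<times>real. snd p) has_derivative (\<lambda>z. snd z)) (at p0 within H)"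
    by (rule has_derivative_snd[OF has_derivative_ident])
  have "((\<lambda>p. c (fst p) + snd p *\<^sub>R W (fst p)) has_derivative
     (\<lambda>z. fst z *\<^sub>R e (fst p0) + (snd p0 *\<^sub>R (fst z *\<^sub>R vd I W (fst p0)) + snd z *\<^sub>R W (fst p0)))) (at p0 within H)"
    by (rule has_derivative_add[OF dc has_derivative_scaleR[OF ds dW]])
  then show ?thesis
    by (rule has_derivative_eq_rhs) (simp add: fun_eq_iff algebra_simps)
qed

lemma sheet_cont:
  fixes H :: "(real \<times> real) set"
  assumes W: "W \<in> {X1, X2}" and H: "\<forall>p\<in>H. fst p \<in> I"
  shows "continuous_on H (\<lambda>p. c (fst p) + snd p *\<^sub>R W (fst p))"
proof -
  have c1: "continuous_on H (\<lambda>p. c (fst p))"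
    by (rule continuous_on_compose2[OF Sm_cont[OF Sm_c] continuous_on_fst[OF continuous_on_id]]) (use H in auto)
  have c2: "continuous_on H (\<lambda>p. W (fst p))"
    by (rule continuous_on_compose2[OF W_cont[OF W] continuous_on_fst[OF continuous_on_id]]) (use H in auto)
  show ?thesis
    by (rule continuous_on_add[OF c1 continuous_on_scaleR[OF continuous_on_snd[OF continuous_on_id] c2]])
qed

end


context curve begin

abbreviation "Psi \<equiv> origami_psi I c \<alpha>"
abbreviation "Phi \<equiv> origami_phi I c \<alpha>"
abbreviation "Sh W \<equiv> (\<lambda>p::real\<times>real. c (fst p) + snd p *\<^sub>R W (fst p))"

definition "P1prop \<epsilon>0 \<longleftrightarrow> (\<forall>s\<in>I. \<forall>s'\<in>I. \<forall>v v' Y Z. \<bar>v\<bar> \<le> \<epsilon>0 \<and> \<bar>v'\<bar> \<le> \<epsilon>0 \<and> Y \<in> {X1, X2} \<and> Z \<in> {X1, X2} \<and>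
        c s + v *\<^sub>R Y s = c s' + v' *\<^sub>R Z s' \<longrightarrow> s = s' \<and> v = v')"
definition "P2prop \<epsilon>0 \<longleftrightarrow> (\<forall>s\<in>I. \<forall>v. \<bar>v\<bar> \<le> \<epsilon>0 \<longrightarrow> cross3 (e s + v *\<^sub>R vd I X1 s) (X1 s) \<noteq> 0 \<and> cross3 (e s + v *\<^sub>R vd I X2 s) (X2 s) \<noteq> 0)"

lemma psi_sheet: "Psi p = Sh (if 0 \<le> snd p then X2 else X1) p"
  by (simp add: psi_eq)

lemma psiK:
  assumes P1: "P1prop \<epsilon>0" and eps: "0 < \<epsilon>" "\<epsilon> \<le> \<epsilon>0"
  shows "inj_on Psi (I \<times> {-\<epsilon>..\<epsilon>})" "continuous_on (I \<times> {-\<epsilon>..\<epsilon>}) Psi" "compact (I \<times> {-\<epsilon>..\<epsilon>})"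
proof -
  let ?K = "I \<times> {-\<epsilon>..\<epsilon>}"
  show "compact ?K" by (intro compact_Times compact_Icc)
  show "inj_on Psi ?K"
  proof (rule inj_onI)
    fix p q assume p: "p \<in> ?K" and q: "q \<in> ?K" and eq: "Psi p = Psi q"
    let ?Y = "if 0 \<le> snd p then X2 else X1"
    let ?Z = "if 0 \<le> snd q then X2 else X1"
    have Y: "?Y \<in> {X1, X2}" "?Z \<in> {X1, X2}" by auto
    have pq: "fst p \<in> I" "fst q \<in> I" "\<bar>snd p\<bar> \<le> \<epsilon>0" "\<bar>snd q\<bar> \<le> \<epsilon>0"
      using p q eps by (auto simp: mem_Times_iff)
    have "c (fst p) + snd p *\<^sub>R ?Y (fst p) = c (fst q) + snd q *\<^sub>R ?Z (fst q)"
      using eq by (simp only: psi_sheet)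
    then have "fst p = fst q \<and> snd p = snd q"
      using P1 pq Y unfolding P1prop_def by blast
    then show "p = q" by (simp add: prod_eq_iff)
  qed
  show "continuous_on ?K Psi"
  proof -
    let ?s = "?K \<inter> {p. 0 \<le> snd p}" and ?t = "?K \<inter> {p. snd p \<le> 0}"
    have cs: "closed ?s" "closed ?t"
      by (intro closed_Int compact_imp_closed \<open>compact ?K\<close> closed_Collect_le continuous_intros)+
    have "continuous_on (?s \<union> ?t) (\<lambda>p. if 0 \<le> snd p then Sh X2 p else Sh X1 p)"
    proof (rule continuous_on_cases[OF cs])
      show "continuous_on ?s (Sh X2)" by (rule sheet_cont) (auto simp: mem_Times_iff)
      show "continuous_on ?t (Sh X1)" by (rule sheet_cont) (auto simp: mem_Times_iff)
      show "\<forall>x. (x \<in> ?s \<and> \<not> 0 \<le> snd x) \<or> (x \<in> ?t \<and> 0 \<le> snd x) \<longrightarrow> Sh X2 x = Sh X1 x"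
        by auto
    qed
    moreover have B: "?s \<union> ?t = ?K" by auto
    ultimately have A: "continuous_on ?K (\<lambda>p. if 0 \<le> snd p then Sh X2 p else Sh X1 p)" by simp
    have eqP: "Psi = (\<lambda>p. if 0 \<le> snd p then Sh X2 p else Sh X1 p)"
      by (simp add: fun_eq_iff psi_eq)
    show ?thesis unfolding eqP by (rule A)
  qed
qed

lemma Ginv:
  assumes P1: "P1prop \<epsilon>0" and eps: "0 < \<epsilon>" "\<epsilon> \<le> \<epsilon>0"
  defines "G \<equiv> inv_into (I \<times> {-\<epsilon>..\<epsilon>}) Psi"
  shows "\<And>y. y \<in> Psi ` (I \<times> {-\<epsilon>..\<epsilon>}) \<Longrightarrow> G y \<in> I \<times> {-\<epsilon>..\<epsilon>} \<and> Psi (G y) = y"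
    "\<And>p1 d. p1 \<in> I \<times> {-\<epsilon>..\<epsilon>} \<Longrightarrow> d > 0 \<Longrightarrow> \<exists>\<rho>>0. \<forall>y\<in>Psi ` (I \<times> {-\<epsilon>..\<epsilon>}). norm (y - Psi p1) < \<rho> \<longrightarrow> norm (G y - p1) < d"
proof -
  let ?K = "I \<times> {-\<epsilon>..\<epsilon>}"
  note K = psiK[OF P1 eps]
  show "G y \<in> ?K \<and> Psi (G y) = y" if "y \<in> Psi ` ?K" for y
    using that by (simp add: G_def inv_into_into f_inv_into_f)
  have GP: "\<forall>x\<in>?K. G (Psi x) = x" using K(1) by (simp add: G_def)
  have cG: "continuous_on (Psi ` ?K) G" by (rule continuous_on_inv[OF K(2) K(3) GP])
  fix p1 :: "real\<times>real" and d :: real assume p1: "p1 \<in> ?K" and d: "d > 0"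
  have "Psi p1 \<in> Psi ` ?K" using p1 by blast
  then obtain \<rho> where "\<rho> > 0" "\<forall>y\<in>Psi ` ?K. dist y (Psi p1) < \<rho> \<longrightarrow> dist (G y) (G (Psi p1)) < d"
    using cG d unfolding continuous_on_iff by blast
  then show "\<exists>\<rho>>0. \<forall>y\<in>Psi ` ?K. norm (y - Psi p1) < \<rho> \<longrightarrow> norm (G y - p1) < d"
    using GP p1 by (auto simp: dist_norm)
qed


lemma Omega_sub: "Omega I \<epsilon> \<subseteq> I \<times> {-\<epsilon>..\<epsilon>}"
  by (auto simp: Omega_def)

lemma stepA:
  assumes P1: "P1prop \<epsilon>0" and P2: "P2prop \<epsilon>0" and eps: "0 < \<epsilon>" "\<epsilon> \<le> \<epsilon>0" and del: "0 < \<delta>" "\<delta> \<le> \<epsilon>"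
    and T: "isometry3 T" and sub: "T ` (Phi ` Omega I \<delta>) \<subseteq> Psi ` Omega I \<epsilon>" and t: "t \<in> I"
  shows "T (c t) \<in> c ` I"
proof (rule ccontr)
  assume nC: "T (c t) \<notin> c ` I"
  let ?K = "I \<times> {-\<epsilon>..\<epsilon>}"
  let ?Ys = "Psi ` ?K"
  define G where "G = inv_into ?K Psi"
  note Gi = Ginv[OF P1 eps, folded G_def]
  define L where "L = (\<lambda>x. T x - T 0)"
  note LL = isom_L[OF T L_def]
  have linL: "linear L" by (rule orthogonal_transformation_linear[OF LL(1)])
  have inPsi: "T (Phi q) \<in> ?Ys" if "q \<in> Omega I \<delta>" for q
    using sub that Omega_sub by blast
  have OmD: "(s, v) \<in> Omega I \<delta>" if "s \<in> I" "\<bar>v\<bar> < \<delta>" for s v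
    using that by (auto simp: Omega_def abs_less_iff)
  have "T (c t) \<in> Psi ` Omega I \<epsilon>"
  proof -
    have "(t, 0) \<in> Omega I \<delta>" using OmD[OF t] del by simp
    moreover have "Phi (t, 0) = c t" by (simp add: phi_eq)
    ultimately show ?thesis using sub by force
  qed
  then obtain p1 where p1': "T (c t) = Psi p1" "p1 \<in> Omega I \<epsilon>" by (rule imageE)
  have p1: "p1 \<in> Omega I \<epsilon>" "Psi p1 = T (c t)" using p1' by simp_all
  have p1K: "p1 \<in> ?K" using p1(1) Omega_sub by blast
  have s1: "fst p1 \<in> I" and v1e: "\<bar>snd p1\<bar> \<le> \<epsilon>0" using p1K eps by (auto simp: mem_Times_iff)
  have v1: "snd p1 \<noteq> 0"
  proof
    assume "snd p1 = 0"
    then have "Psi p1 = c (fst p1)" by (simp add: psi_eq)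
    then show False using nC p1(2) s1 by auto
  qed
  define W where "W = (if 0 \<le> snd p1 then X2 else X1)"
  have W: "W \<in> {X1, X2}" by (simp add: W_def)
  define a1 where "a1 = e (fst p1) + snd p1 *\<^sub>R vd I W (fst p1)"
  define a2 where "a2 = W (fst p1)"
  have dA: "(Sh W has_derivative (\<lambda>z. fst z *\<^sub>R a1 + snd z *\<^sub>R a2)) (at p1 within ?K)"
    unfolding a1_def a2_def by (rule sheet_deriv[OF W p1K]) (auto simp: mem_Times_iff)
  have N: "cross3 a1 a2 \<noteq> 0"
    using P2 s1 v1e unfolding P2prop_def a1_def a2_def W_def by auto
  have Ap1: "Sh W p1 = Psi p1" by (simp add: psi_sheet W_def)
  have Gc: "\<forall>d>0. \<exists>\<rho>>0. \<forall>y\<in>?Ys. norm (y - Sh W p1) < \<rho> \<longrightarrow> norm (G y - p1) < d"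
    using Gi(2)[OF p1K] Ap1 by simp
  have GH: "\<exists>r0>0. \<forall>y\<in>?Ys. norm (G y - p1) < r0 \<longrightarrow> G y \<in> ?K \<and> Sh W (G y) = y"
  proof (intro exI conjI ballI impI)
    show "\<bar>snd p1\<bar> > 0" using v1 by simp
    fix y assume y: "y \<in> ?Ys" and n: "norm (G y - p1) < \<bar>snd p1\<bar>"
    show "G y \<in> ?K" using Gi(1)[OF y] by blast
    have "norm (snd (G y - p1)) \<le> norm (fst (G y - p1), snd (G y - p1))" by (rule norm_snd_le)
    then have "\<bar>snd (G y) - snd p1\<bar> \<le> norm (G y - p1)" by (simp only: prod.collapse) simp
    then have "\<bar>snd (G y) - snd p1\<bar> < \<bar>snd p1\<bar>" using n by linarith
    then have "(0 \<le> snd (G y)) = (0 \<le> snd p1)" using v1 by (auto simp: abs_if split: if_splits)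
    then have "Psi (G y) = Sh W (G y)" by (simp add: psi_sheet W_def)
    then show "Sh W (G y) = y" using Gi(1)[OF y] by simp
  qed
  have dirw: "w \<bullet> cross3 a1 a2 = 0"
    if "\<forall>\<eta>>0. \<exists>d>0. \<forall>v. 0 < v \<and> v < d \<longrightarrow> y v \<in> ?Ys \<and> norm (y v - Sh W p1 - v *\<^sub>R w) \<le> \<eta> * v" for w y
    by (rule dir_lemma[OF dA N Gc GH that])
  have TL: "T (c t + u) = T (c t) + L u" for u
  proof -
    have "T (c t + u) - T (c t) = L (c t + u - c t)" by (rule LL(2))
    then have "T (c t + u) - T (c t) = L u" by simp
    then show ?thesis by (metis diff_add_cancel add.commute)
  qed
  have F1: "L (X1 t) \<bullet> cross3 a1 a2 = 0"
  proof (rule dirw[where y="\<lambda>v. T (c t + v *\<^sub>R X1 t)"], intro allI impI exI conjI)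
    fix \<eta> :: real and v :: real assume "\<eta> > 0" "0 < v \<and> v < \<delta>"
    then have "(t, v) \<in> Omega I \<delta>" using OmD[OF t] by simp
    moreover have "Phi (t, v) = c t + v *\<^sub>R X1 t" using \<open>0 < v \<and> v < \<delta>\<close> by (simp add: phi_eq)
    ultimately show "T (c t + v *\<^sub>R X1 t) \<in> ?Ys" using inPsi by metis
    have "T (c t + v *\<^sub>R X1 t) - Sh W p1 - v *\<^sub>R L (X1 t) = 0"
      using TL[of "v *\<^sub>R X1 t"] Ap1 p1(2) linear_scale[OF linL] by simp
    then show "norm (T (c t + v *\<^sub>R X1 t) - Sh W p1 - v *\<^sub>R L (X1 t)) \<le> \<eta> * v"
      using \<open>\<eta> > 0\<close> \<open>0 < v \<and> v < \<delta>\<close> by simp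
  qed (use del in auto)
  have F2: "(- L (X2 t)) \<bullet> cross3 a1 a2 = 0"
  proof (rule dirw[where y="\<lambda>v. T (c t + (- v) *\<^sub>R X2 t)"], intro allI impI exI conjI)
    fix \<eta> :: real and v :: real assume "\<eta> > 0" "0 < v \<and> v < \<delta>"
    then have "(t, - v) \<in> Omega I \<delta>" using OmD[OF t] by simp
    moreover have "Phi (t, - v) = c t + (- v) *\<^sub>R X2 t" using \<open>0 < v \<and> v < \<delta>\<close> by (simp add: phi_eq)
    ultimately show "T (c t + (- v) *\<^sub>R X2 t) \<in> ?Ys" using inPsi by metis
    have "T (c t + (- v) *\<^sub>R X2 t) - Sh W p1 - v *\<^sub>R (- L (X2 t)) = 0"
      using TL[of "(- v) *\<^sub>R X2 t"] Ap1 p1(2) linear_scale[OF linL] linear_neg[OF linL] by simp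
    then show "norm (T (c t + (- v) *\<^sub>R X2 t) - Sh W p1 - v *\<^sub>R (- L (X2 t))) \<le> \<eta> * v"
      using \<open>\<eta> > 0\<close> \<open>0 < v \<and> v < \<delta>\<close> by simp
  qed (use del in auto)
  have F3: "L (e t) \<bullet> cross3 a1 a2 = 0"
  proof -
    have cd: "\<forall>\<eta>>0. \<exists>d>0. \<forall>y\<in>I. norm (y - t) < d \<longrightarrow> norm (c y - c t - (y - t) *\<^sub>R e t) \<le> \<eta> * norm (y - t)"
      using c_deriv[OF t] unfolding has_vector_derivative_def has_derivative_within_alt by blast
    have est: "norm (T (c s) - Sh W p1 - (s - t) *\<^sub>R L (e t)) = norm (c s - c t - (s - t) *\<^sub>R e t)" for s
    proof -
      have "T (c s) - Sh W p1 - (s - t) *\<^sub>R L (e t) = L (c s - c t) - L ((s - t) *\<^sub>R e t)"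
        using LL(2)[of "c s" "c t"] Ap1 p1(2) linear_scale[OF linL] by simp
      also have "\<dots> = L (c s - c t - (s - t) *\<^sub>R e t)" by (simp add: linear_diff[OF linL])
      finally show ?thesis using LL(3) by simp
    qed
    have inY: "T (c s) \<in> ?Ys" if "s \<in> I" for s
    proof -
      have "(s, 0) \<in> Omega I \<delta>" using OmD[OF that] del by simp
      moreover have "Phi (s, 0) = c s" by (simp add: phi_eq)
      ultimately show ?thesis using inPsi by metis
    qed
    show ?thesis
    proof (cases "t < b")
      case True
      have "L (e t) \<bullet> cross3 a1 a2 = 0"
      proof (rule dirw[where y="\<lambda>v. T (c (t + v))"], intro allI impI)
        fix \<eta> :: real assume eta: "\<eta> > 0"
        then obtain dc where dc: "dc > 0" "\<forall>y\<in>I. norm (y - t) < dc \<longrightarrow> norm (c y - c t - (y - t) *\<^sub>R e t) \<le> \<eta> * norm (y - t)"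
          using cd by blast
        show "\<exists>d>0. \<forall>v. 0 < v \<and> v < d \<longrightarrow> T (c (t + v)) \<in> ?Ys \<and> norm (T (c (t + v)) - Sh W p1 - v *\<^sub>R L (e t)) \<le> \<eta> * v"
        proof (intro exI[of _ "min dc (b - t)"] conjI allI impI)
          show "0 < min dc (b - t)" using dc(1) True by simp
          fix v assume v: "0 < v \<and> v < min dc (b - t)"
          have tv: "t + v \<in> I" using v t by auto
          show "T (c (t + v)) \<in> ?Ys" by (rule inY[OF tv])
          have "norm (t + v - t) < dc" using v by simp
          then have "norm (c (t + v) - c t - (t + v - t) *\<^sub>R e t) \<le> \<eta> * norm (t + v - t)"
            using dc(2) tv by blast
          then show "norm (T (c (t + v)) - Sh W p1 - v *\<^sub>R L (e t)) \<le> \<eta> * v"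
            using est[of "t + v"] v by simp
        qed
      qed
      then show ?thesis .
    next
      case False
      then have tb: "t = b" using t by simp
      have "(- L (e t)) \<bullet> cross3 a1 a2 = 0"
      proof (rule dirw[where y="\<lambda>v. T (c (t - v))"], intro allI impI)
        fix \<eta> :: real assume eta: "\<eta> > 0"
        then obtain dc where dc: "dc > 0" "\<forall>y\<in>I. norm (y - t) < dc \<longrightarrow> norm (c y - c t - (y - t) *\<^sub>R e t) \<le> \<eta> * norm (y - t)"
          using cd by blast
        show "\<exists>d>0. \<forall>v. 0 < v \<and> v < d \<longrightarrow> T (c (t - v)) \<in> ?Ys \<and> norm (T (c (t - v)) - Sh W p1 - v *\<^sub>R (- L (e t))) \<le> \<eta> * v"
        proof (intro exI[of _ "min dc (t - a)"] conjI allI impI)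
          show "0 < min dc (t - a)" using dc(1) tb ab by simp
          fix v assume v: "0 < v \<and> v < min dc (t - a)"
          have tv: "t - v \<in> I" using v t by auto
          show "T (c (t - v)) \<in> ?Ys" by (rule inY[OF tv])
          have "norm (t - v - t) < dc" using v by simp
          then have "norm (c (t - v) - c t - (t - v - t) *\<^sub>R e t) \<le> \<eta> * norm (t - v - t)"
            using dc(2) tv by blast
          then show "norm (T (c (t - v)) - Sh W p1 - v *\<^sub>R (- L (e t))) \<le> \<eta> * v"
            using est[of "t - v"] v by simp
        qed
      qed
      then show ?thesis by simp
    qed
  qed
  obtain z where z: "cross3 a1 a2 = L z"
    using orthogonal_transformation_surj[OF LL(1)] by (metis surjD)
  have "z \<bullet> e t = 0" using F3 z LL(4) by (simp add: inner_commute)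
  moreover have "z \<bullet> X1 t = 0" using F1 z LL(4) by (simp add: inner_commute)
  moreover have "z \<bullet> X2 t = 0" using F2 z LL(4) by (simp add: inner_commute)
  ultimately have "z = 0" using perp3_zero[OF X_triple[OF t]] by blast
  then have "cross3 a1 a2 = 0" using z linear_0[OF linL] by simp
  then show False using N by simp
qed


lemma stepC:
  assumes P1: "P1prop \<epsilon>0" and P2: "P2prop \<epsilon>0" and eps: "0 < \<epsilon>" "\<epsilon> \<le> \<epsilon>0" and del: "0 < \<delta>" "\<delta> \<le> \<epsilon>"
    and sub: "Phi ` Omega I \<delta> \<subseteq> Psi ` Omega I \<epsilon>"
  shows False
proof -
  let ?K = "I \<times> {-\<epsilon>..\<epsilon>}"
  let ?Ys = "Psi ` ?K"
  define G where "G = inv_into ?K Psi"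
  note Gi = Ginv[OF P1 eps, folded G_def]
  define p1 where "p1 = (a, 0::real)"
  have aI: "a \<in> I" using ab by simp
  have p1K: "p1 \<in> ?K" using aI eps by (simp add: p1_def)
  have Pp1: "Psi p1 = c a" by (simp add: psi_eq p1_def)
  define E where "E = e a"
  define u where "u = X1 a"
  define Y where "Y = X2 a"
  have HK: "\<forall>p\<in>?K. fst p \<in> I" by (auto simp: mem_Times_iff)
  have dP: "(Sh X2 has_derivative (\<lambda>z. fst z *\<^sub>R E + snd z *\<^sub>R Y)) (at p1 within ?K)"
    using sheet_deriv[of X2 p1 ?K] p1K HK by (simp add: p1_def E_def Y_def)
  have dM: "(Sh X1 has_derivative (\<lambda>z. fst z *\<^sub>R E + snd z *\<^sub>R u)) (at p1 within ?K)"
    using sheet_deriv[of X1 p1 ?K] p1K HK by (simp add: p1_def E_def u_def)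
  have uE: "norm E = 1" "norm u = 1" "norm Y = 1"
    using e_unit[OF aI] W_unit[of X1, OF _ aI] W_unit[of X2, OF _ aI] by (simp_all add: E_def u_def Y_def)
  have cEY: "cross3 E Y \<noteq> 0" and cEu: "norm (cross3 E u) > 0"
    using X_props(2)[OF aI, of "\<lambda>t. - \<alpha> t"] X_props(2)[OF aI, of \<alpha>] beta_sin[of "\<lambda>t. - \<alpha> t" a] beta_sin[of \<alpha> a]
    by (auto simp: E_def u_def Y_def)
  obtain mp where mp: "mp > 0" "\<forall>z. mp * norm z \<le> norm (fst z *\<^sub>R E + snd z *\<^sub>R Y)"
    using lower2[OF cEY] by blast
  have cEu': "cross3 E u \<noteq> 0" using cEu by auto
  obtain mm where mm: "mm > 0" "\<forall>z. mm * norm z \<le> norm (fst z *\<^sub>R E + snd z *\<^sub>R u)"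
    using lower2[OF cEu'] by blast
  define Np where "Np = cross3 E Y"
  define Qp where "Qp = \<bar>u \<bullet> Np\<bar>"
  have "u \<bullet> cross3 E Y = - (E \<bullet> cross3 u Y)"
    by (metis cross_skew cross_triple inner_commute inner_minus_left)
  then have Qp: "Qp > 0" using X_triple[OF aI] by (simp add: Qp_def Np_def E_def u_def Y_def)
  define w where "w = u - (u \<bullet> E) *\<^sub>R E"
  have EE: "E \<bullet> E = 1" using uE(1) by (metis power2_norm_eq_inner one_power2)
  have uu: "u \<bullet> u = 1" using uE(2) by (metis power2_norm_eq_inner one_power2)
  have wE: "w \<bullet> E = 0" by (simp add: w_def inner_diff_left EE)
  define Qm where "Qm = w \<bullet> u"
  have Qm: "Qm > 0"
  proof -
    have "(norm (cross3 E u))\<^sup>2 + (E \<bullet> u)\<^sup>2 = 1" using norm_cross_dot[of E u] uE by simp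
    moreover have "(norm (cross3 E u))\<^sup>2 > 0" using cEu by simp
    ultimately have "(E \<bullet> u)\<^sup>2 < 1" by linarith
    moreover have "Qm = 1 - (E \<bullet> u)\<^sup>2"
      by (simp add: Qm_def w_def inner_diff_left inner_diff_right uu inner_commute[of u E] power2_eq_square)
    ultimately show ?thesis by simp
  qed
  define Cp where "Cp = (2 / mp) * (norm Np + 1)"
  define Cm where "Cm = (2 / mm) * (norm w + 1)"
  have Cp: "Cp > 0" using mp(1) by (simp add: Cp_def add_nonneg_pos)
  have Cm: "Cm > 0" using mm(1) by (simp add: Cm_def add_nonneg_pos)
  define \<eta> where "\<eta> = min (Qp / (2 * Cp)) (Qm / (2 * Cm))"
  have eta: "\<eta> > 0" using Qp Qm Cp Cm by (simp add: \<eta>_def)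
  have etaP: "\<eta> * Cp \<le> Qp / 2"
  proof -
    have "\<eta> * Cp \<le> Qp / (2 * Cp) * Cp" using Cp by (intro mult_right_mono) (auto simp: \<eta>_def)
    then show ?thesis using Cp by simp
  qed
  have etaM: "\<eta> * Cm \<le> Qm / 2"
  proof -
    have "\<eta> * Cm \<le> Qm / (2 * Cm) * Cm" using Cm by (intro mult_right_mono) (auto simp: \<eta>_def)
    then show ?thesis using Cm by simp
  qed
  obtain dp where dp: "dp > 0" "\<forall>p\<in>?K. norm (p - p1) < dp \<longrightarrow>
     norm (p - p1) \<le> (2 / mp) * norm (Sh X2 p - Sh X2 p1) \<and>
     norm (Sh X2 p - Sh X2 p1 - (fst (p - p1) *\<^sub>R E + snd (p - p1) *\<^sub>R Y)) \<le> \<eta> * norm (p - p1)"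
    using LL[OF dP mp(2) mp(1) eta] by blast
  obtain dm where dm: "dm > 0" "\<forall>p\<in>?K. norm (p - p1) < dm \<longrightarrow>
     norm (p - p1) \<le> (2 / mm) * norm (Sh X1 p - Sh X1 p1) \<and>
     norm (Sh X1 p - Sh X1 p1 - (fst (p - p1) *\<^sub>R E + snd (p - p1) *\<^sub>R u)) \<le> \<eta> * norm (p - p1)"
    using LL[OF dM mm(2) mm(1) eta] by blast
  have "min dp dm > 0" using dp(1) dm(1) by simp
  then obtain \<rho> where rho: "\<rho> > 0" "\<forall>y\<in>?Ys. norm (y - Psi p1) < \<rho> \<longrightarrow> norm (G y - p1) < min dp dm"
    using Gi(2)[OF p1K] by blast
  define v where "v = min \<delta> \<rho> / 2"
  have v: "0 < v" "v < \<delta>" "v < \<rho>" using del rho(1) by (auto simp: v_def)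
  define y where "y = c a + v *\<^sub>R u"
  have "(a, v) \<in> Omega I \<delta>" using aI v by (auto simp: Omega_def)
  moreover have "Phi (a, v) = y" using v by (simp add: phi_eq y_def u_def)
  ultimately have "y \<in> Psi ` Omega I \<epsilon>" using sub by force
  then have yY: "y \<in> ?Ys" using Omega_sub by blast
  have "norm (y - Psi p1) = v" using Pp1 uE(2) v(1) by (simp add: y_def)
  then have "norm (y - Psi p1) < \<rho>" using v(3) by simp
  then have "norm (G y - p1) < min dp dm" using bspec[OF rho(2) yY] by blast
  define p where "p = G y"
  have pK: "p \<in> ?K" and Pp: "Psi p = y" using Gi(1)[OF yY] by (simp_all add: p_def)
  have pdp: "norm (p - p1) < dp" and pdm: "norm (p - p1) < dm"
    using \<open>norm (G y - p1) < min dp dm\<close> by (simp_all add: p_def)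
  have Sp1: "Sh X2 p1 = c a" "Sh X1 p1 = c a" by (simp_all add: p1_def)
  show False
  proof (cases "0 \<le> snd p")
    case True
    then have Shp: "Sh X2 p = y" using Pp by (simp add: psi_sheet)
    have LL0: "norm (p - p1) \<le> (2 / mp) * norm (Sh X2 p - Sh X2 p1) \<and>
     norm (Sh X2 p - Sh X2 p1 - (fst (p - p1) *\<^sub>R E + snd (p - p1) *\<^sub>R Y)) \<le> \<eta> * norm (p - p1)"
      using dp(2) pK pdp by blast
    have df: "Sh X2 p - Sh X2 p1 = v *\<^sub>R u" using Shp Sp1 by (simp add: y_def)
    have nv: "norm (v *\<^sub>R u) = v" using uE(2) v(1) by simp
    have L1: "norm (p - p1) \<le> (2 / mp) * v" and L2: "norm (v *\<^sub>R u - (fst (p - p1) *\<^sub>R E + snd (p - p1) *\<^sub>R Y)) \<le> \<eta> * norm (p - p1)"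
      using LL0 unfolding df nv by simp_all
    define R where "R = v *\<^sub>R u - (fst (p - p1) *\<^sub>R E + snd (p - p1) *\<^sub>R Y)"
    have DN: "(fst (p - p1) *\<^sub>R E + snd (p - p1) *\<^sub>R Y) \<bullet> Np = 0"
      by (simp add: Np_def inner_add_left dot_cross_self)
    have "v * (u \<bullet> Np) = R \<bullet> Np" using DN by (simp add: R_def inner_diff_left)
    then have h: "\<bar>v * (u \<bullet> Np)\<bar> = \<bar>R \<bullet> Np\<bar>" by simp
    have "\<bar>v * (u \<bullet> Np)\<bar> = v * Qp" using v(1) by (simp add: Qp_def abs_mult)
    then have "v * Qp = \<bar>R \<bullet> Np\<bar>" using h by simp
    also have "\<dots> \<le> norm R * norm Np" by (rule Cauchy_Schwarz_ineq2)
    also have "\<dots> \<le> (\<eta> * ((2 / mp) * v)) * (norm Np + 1)"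
    proof (rule mult_mono)
      have "\<eta> * norm (p - p1) \<le> \<eta> * ((2 / mp) * v)" using L1 eta by (intro mult_left_mono) auto
      then show "norm R \<le> \<eta> * ((2 / mp) * v)" using L2 by (simp add: R_def)
    qed (use eta mp(1) v(1) in auto)
    also have "\<dots> = v * (\<eta> * Cp)" by (simp add: Cp_def)
    also have "\<dots> \<le> v * (Qp / 2)" using etaP v(1) by (intro mult_left_mono) auto
    finally have "v * Qp \<le> v * (Qp / 2)" .
    then show False using v(1) Qp by simp
  next
    case False
    then have Shp: "Sh X1 p = y" using Pp by (simp add: psi_sheet)
    have LL0: "norm (p - p1) \<le> (2 / mm) * norm (Sh X1 p - Sh X1 p1) \<and>
     norm (Sh X1 p - Sh X1 p1 - (fst (p - p1) *\<^sub>R E + snd (p - p1) *\<^sub>R u)) \<le> \<eta> * norm (p - p1)"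
      using dm(2) pK pdm by blast
    have df: "Sh X1 p - Sh X1 p1 = v *\<^sub>R u" using Shp Sp1 by (simp add: y_def)
    have nv: "norm (v *\<^sub>R u) = v" using uE(2) v(1) by simp
    have L1: "norm (p - p1) \<le> (2 / mm) * v" and L2: "norm (v *\<^sub>R u - (fst (p - p1) *\<^sub>R E + snd (p - p1) *\<^sub>R u)) \<le> \<eta> * norm (p - p1)"
      using LL0 unfolding df nv by simp_all
    define R where "R = v *\<^sub>R u - (fst (p - p1) *\<^sub>R E + snd (p - p1) *\<^sub>R u)"
    define k where "k = snd (p - p1)"
    have k: "k < 0" using False by (simp add: k_def p1_def)
    have "v * Qm = k * Qm + R \<bullet> w"
      by (simp add: R_def k_def Qm_def inner_diff_left inner_add_left inner_commute[of E w] inner_commute[of u w] wE algebra_simps)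
    then have "(v - k) * Qm = R \<bullet> w" by (simp add: algebra_simps)
    moreover have "v * Qm \<le> (v - k) * Qm" using k Qm by (intro mult_right_mono) auto
    ultimately have "v * Qm \<le> \<bar>R \<bullet> w\<bar>" by simp
    also have "\<dots> \<le> norm R * norm w" by (rule Cauchy_Schwarz_ineq2)
    also have "\<dots> \<le> (\<eta> * ((2 / mm) * v)) * (norm w + 1)"
    proof (rule mult_mono)
      have "\<eta> * norm (p - p1) \<le> \<eta> * ((2 / mm) * v)" using L1 eta by (intro mult_left_mono) auto
      then show "norm R \<le> \<eta> * ((2 / mm) * v)" using L2 by (simp add: R_def)
    qed (use eta mm(1) v(1) in auto)
    also have "\<dots> = v * (\<eta> * Cm)" by (simp add: Cm_def)
    also have "\<dots> \<le> v * (Qm / 2)" using etaM v(1) by (intro mult_left_mono) auto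
    finally have "v * Qm \<le> v * (Qm / 2)" .
    then show False using v(1) Qm by simp
  qed
qed


lemma noT:
  assumes sym: "\<forall>T. isometry3 T \<and> T ` (c ` I) = c ` I \<longrightarrow> T = id"
    and P1: "P1prop \<epsilon>0" and P2: "P2prop \<epsilon>0" and eps: "0 < \<epsilon>" "\<epsilon> \<le> \<epsilon>0" and del: "0 < \<delta>" "\<delta> \<le> \<epsilon>"
    and T: "isometry3 T" and sub: "T ` (Phi ` Omega I \<delta>) \<subseteq> Psi ` Omega I \<epsilon>"
  shows False
proof -
  have A: "T ` (c ` I) \<subseteq> c ` I" using stepA[OF P1 P2 eps del T sub] by blast
  have dT: "\<forall>x y. dist (T x) (T y) = dist x y" using T by (simp add: isometry3_def)
  have cC: "compact (c ` I)" by (rule compact_continuous_image[OF Sm_cont[OF Sm_c] compact_Icc])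
  have "T ` (c ` I) = c ` I" by (rule isom_onto[OF cC dT A])
  then have "T = id" using sym T by blast
  then have "Phi ` Omega I \<delta> \<subseteq> Psi ` Omega I \<epsilon>" using sub by simp
  then show False by (rule stepC[OF P1 P2 eps del])
qed

lemma main:
  assumes sym: "\<forall>T. isometry3 T \<and> T ` (c ` I) = c ` I \<longrightarrow> T = id"
  shows "\<exists>\<epsilon>0>0. \<forall>\<epsilon>. 0 < \<epsilon> \<and> \<epsilon> \<le> \<epsilon>0 \<longrightarrow>
           (\<forall>\<delta>. 0 < \<delta> \<and> \<delta> \<le> \<epsilon> \<longrightarrow>
              \<not> (\<exists>T. isometry3 T \<and> T ` (Phi ` Omega I \<delta>) \<subseteq> Psi ` Omega I \<epsilon>))"
proof -
  obtain \<epsilon>0 where e0: "\<epsilon>0 > 0"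
    and Q1: "\<forall>s\<in>I. \<forall>s'\<in>I. \<forall>v v' Y Z. \<bar>v\<bar> \<le> \<epsilon>0 \<and> \<bar>v'\<bar> \<le> \<epsilon>0 \<and> Y \<in> {X1, X2} \<and> Z \<in> {X1, X2} \<and>
        c s + v *\<^sub>R Y s = c s' + v' *\<^sub>R Z s' \<longrightarrow> s = s' \<and> v = v'"
    and Q2: "\<forall>s\<in>I. \<forall>v. \<bar>v\<bar> \<le> \<epsilon>0 \<longrightarrow> cross3 (e s + v *\<^sub>R vd I X1 s) (X1 s) \<noteq> 0 \<and> cross3 (e s + v *\<^sub>R vd I X2 s) (X2 s) \<noteq> 0"
    by (rule small)
  have P1: "P1prop \<epsilon>0" using Q1 unfolding P1prop_def .
  have P2: "P2prop \<epsilon>0" using Q2 unfolding P2prop_def .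
  show ?thesis
  proof (intro exI[of _ \<epsilon>0] conjI allI impI notI)
    show "\<epsilon>0 > 0" by (rule e0)
    fix \<epsilon> \<delta> assume eps: "0 < \<epsilon> \<and> \<epsilon> \<le> \<epsilon>0" and del: "0 < \<delta> \<and> \<delta> \<le> \<epsilon>"
      and ex: "\<exists>T. isometry3 T \<and> T ` (Phi ` Omega I \<delta>) \<subseteq> Psi ` Omega I \<epsilon>"
    then obtain T where T: "isometry3 T" "T ` (Phi ` Omega I \<delta>) \<subseteq> Psi ` Omega I \<epsilon>" by blast
    have e1: "0 < \<epsilon>" "\<epsilon> \<le> \<epsilon>0" and d1: "0 < \<delta>" "\<delta> \<le> \<epsilon>" using eps del by auto
    show False by (rule noT[OF sym P1 P2 e1 d1 T])
  qed
qed

end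


theorem corollary1p2:
  fixes c :: "real \<Rightarrow> real^3" and \<alpha> :: "real \<Rightarrow> real" and a b :: real
  assumes "a < b"
    and "smooth_on {a..b} c"
    and "\<forall>t\<in>{a..b}. norm (vd {a..b} c t) = 1"
    and "\<forall>t\<in>{a..b}. curv {a..b} c t > 0"
    and "inj_on c {a..b}"
    and "smooth_on {a..b} \<alpha>"
    and "\<forall>t\<in>{a..b}. 0 < \<bar>\<alpha> t\<bar> \<and> \<bar>\<alpha> t\<bar> < pi / 2"
    and "\<forall>T. isometry3 T \<and> T ` (c ` {a..b}) = c ` {a..b} \<longrightarrow> T = id"
  shows "\<exists>\<epsilon>0>0. \<forall>\<epsilon>. 0 < \<epsilon> \<and> \<epsilon> \<le> \<epsilon>0 \<longrightarrow>
           (\<forall>\<delta>. 0 < \<delta> \<and> \<delta> \<le> \<epsilon> \<longrightarrow>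
              \<not> (\<exists>T. isometry3 T \<and>
                   T ` (origami_phi {a..b} c \<alpha> ` Omega {a..b} \<delta>)
                     \<subseteq> origami_psi {a..b} c \<alpha> ` Omega {a..b} \<epsilon>))"
proof -
  have cv: "curve a b c \<alpha>"
    by (rule curve.intro) (fact assms(1), fact assms(2), fact assms(3), fact assms(4), fact assms(5), fact assms(6), fact assms(7))
  show ?thesis by (rule curve.main[OF cv assms(8)])
qed

end
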